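(* Let $G$ be a line graph. The following are equivalent: (i) $G$ has a $K_4$-immersion; (ii) $G$ has a $K_4$-minor; (iii) for every graph $H$ with $G=L(H)$, either $\Delta(H)\geq 4$ or $H$ contains two distinct cycles that share at least one edge, where at most one of these two cycles has length two.
   Context: Graphs are finite and may have parallel edges but no loops; a cycle of length two consists of two parallel edges; $\Delta(H)$ is the maximum degree of $H$ (counting parallel edges with multiplicity). A line graph is a graph of the form $L(H)$, the simple graph with vertex set $E(H)$ in which two distinct edges of $H$ are adjacent iff they share at least one endpoint. A graph $G$ has a $K_t$-immersion if there is an injective map $\phi$ from the vertex set of $K_t$ to $V(G)$ and, for each pair $u\neq v$ of vertices of $K_t$, a path in $G$ joining $\phi(u)$ and $\phi(v)$, such that these paths are pairwise edge-disjoint. $G$ has a $K_t$-minor if $K_t$ can be obtained from a subgraph of $G$ by contracting edges. *)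

theory Defs
  imports Main
begin

definition simple_graph :: "'a set \<Rightarrow> 'a set set \<Rightarrow> bool" where
  "simple_graph V E \<longleftrightarrow> finite V \<and> (\<forall>e\<in>E. e \<subseteq> V \<and> card e = 2)"

definition is_path :: "'a set set \<Rightarrow> 'a list \<Rightarrow> 'a \<Rightarrow> 'a \<Rightarrow> bool" where
  "is_path E p a b \<longleftrightarrow> p \<noteq> [] \<and> hd p = a \<and> last p = b \<and> distinct p \<and>
     (\<forall>i. Suc i < length p \<longrightarrow> {p ! i, p ! Suc i} \<in> E)"

definition path_edges :: "'a list \<Rightarrow> 'a set set" where
  "path_edges p = {{p ! i, p ! Suc i} | i. Suc i < length p}"

definition has_Kt_immersion :: "nat \<Rightarrow> 'a set \<Rightarrow> 'a set set \<Rightarrow> bool" where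
  "has_Kt_immersion t V E \<longleftrightarrow>
     (\<exists>(\<phi> :: nat \<Rightarrow> 'a) (P :: nat \<Rightarrow> nat \<Rightarrow> 'a list).
        inj_on \<phi> {..<t} \<and> \<phi> ` {..<t} \<subseteq> V \<and>
        (\<forall>i j. i < j \<and> j < t \<longrightarrow> is_path E (P i j) (\<phi> i) (\<phi> j)) \<and>
        (\<forall>i j i' j'. i < j \<and> j < t \<and> i' < j' \<and> j' < t \<and> (i, j) \<noteq> (i', j') \<longrightarrow>
            path_edges (P i j) \<inter> path_edges (P i' j') = {}))"

definition connected_in :: "'a set set \<Rightarrow> 'a set \<Rightarrow> bool" where
  "connected_in E B \<longleftrightarrow>
     (\<forall>x\<in>B. \<forall>y\<in>B. (\<lambda>u v. u \<in> B \<and> v \<in> B \<and> {u, v} \<in> E)\<^sup>*\<^sup>* x y)"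

text \<open>K_t-minor, via branch sets (standard equivalent of "obtained from a subgraph
  by contracting edges").\<close>

definition has_Kt_minor :: "nat \<Rightarrow> 'a set \<Rightarrow> 'a set set \<Rightarrow> bool" where
  "has_Kt_minor t V E \<longleftrightarrow>
     (\<exists>B :: nat \<Rightarrow> 'a set.
        (\<forall>i<t. B i \<noteq> {} \<and> B i \<subseteq> V \<and> connected_in E (B i)) \<and>
        (\<forall>i j. i < j \<and> j < t \<longrightarrow> B i \<inter> B j = {} \<and> (\<exists>x\<in>B i. \<exists>y\<in>B j. {x, y} \<in> E)))"

definition multigraph :: "'v set \<Rightarrow> 'e set \<Rightarrow> ('e \<Rightarrow> 'v set) \<Rightarrow> bool" where
  "multigraph VH EH ends \<longleftrightarrow> finite VH \<and> finite EH \<and>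
     (\<forall>e\<in>EH. ends e \<subseteq> VH \<and> card (ends e) = 2)"

definition mdegree :: "'v set \<Rightarrow> 'e set \<Rightarrow> ('e \<Rightarrow> 'v set) \<Rightarrow> 'v \<Rightarrow> nat" where
  "mdegree VH EH ends v = card {e \<in> EH. v \<in> ends e}"

definition max_degree :: "'v set \<Rightarrow> 'e set \<Rightarrow> ('e \<Rightarrow> 'v set) \<Rightarrow> nat" where
  "max_degree VH EH ends = Max (insert 0 (mdegree VH EH ends ` VH))"

text \<open>A cycle, identified with its edge set C: distinct vertices v_0..v_(k-1), distinct
  edges e_0..e_(k-1), k >= 2, e_i joins v_i and v_(i+1 mod k). Its length is card C.\<close>

definition is_cycle :: "'v set \<Rightarrow> 'e set \<Rightarrow> ('e \<Rightarrow> 'v set) \<Rightarrow> 'e set \<Rightarrow> bool" where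
  "is_cycle VH EH ends C \<longleftrightarrow>
     (\<exists>vs es. length vs = length es \<and> length vs \<ge> 2 \<and> distinct vs \<and> distinct es \<and>
        set es = C \<and> set vs \<subseteq> VH \<and> set es \<subseteq> EH \<and>
        (\<forall>i<length es. ends (es ! i) = {vs ! i, vs ! ((Suc i) mod length vs)}))"

definition line_edges :: "'e set \<Rightarrow> ('e \<Rightarrow> 'v set) \<Rightarrow> 'e set set" where
  "line_edges EH ends = {{e, f} | e f. e \<in> EH \<and> f \<in> EH \<and> e \<noteq> f \<and> ends e \<inter> ends f \<noteq> {}}"

text \<open>G = L(H) up to isomorphism: w.l.o.g. the edges of H are the vertices of G and the
  vertices of H are natural numbers (any finite vertex set can be relabelled into nat).\<close>

definition is_line_graph_of :: "'a set \<Rightarrow> 'a set set \<Rightarrow> nat set \<Rightarrow> ('a \<Rightarrow> nat set) \<Rightarrow> bool" where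
  "is_line_graph_of V E VH ends \<longleftrightarrow> multigraph VH V ends \<and> E = line_edges V ends"

definition is_line_graph :: "'a set \<Rightarrow> 'a set set \<Rightarrow> bool" where
  "is_line_graph V E \<longleftrightarrow> (\<exists>VH ends. is_line_graph_of V E VH ends)"

end

theory Submission
  imports Defs "HOL-Library.Transitive_Closure_Table"
begin

definition reach :: "('e \<Rightarrow> nat set) \<Rightarrow> 'e set \<Rightarrow> nat \<Rightarrow> nat \<Rightarrow> bool" where
  "reach ends F = (\<lambda>a b. \<exists>e\<in>F. ends e = {a, b})\<^sup>*\<^sup>*"

lemma reach_refl[simp]: "reach ends F a a"
  unfolding reach_def by simp

lemma reach_mono: "reach ends F p q \<Longrightarrow> F \<subseteq> F' \<Longrightarrow> reach ends F' p q"
  unfolding reach_def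
  by (erule rtranclp_mono[THEN predicate2D, rotated]) auto

lemma reach_trans: "reach ends F p q \<Longrightarrow> reach ends F q r \<Longrightarrow> reach ends F p r"
  unfolding reach_def by (rule rtranclp_trans)

lemma reach_sym: "reach ends F p q \<Longrightarrow> reach ends F q p"
  unfolding reach_def
proof (induction rule: rtranclp_induct)
  case base then show ?case by simp
next
  case (step y z)
  then have "(\<lambda>a b. \<exists>e\<in>F. ends e = {a, b}) z y" by (auto simp: insert_commute)
  then show ?case using step(3) by (rule converse_rtranclp_into_rtranclp)
qed

lemma card2_ends: "card X = 2 \<Longrightarrow> \<exists>a b. a \<noteq> b \<and> X = {a, b}"
  by (metis card_2_iff)

lemma reach_edge2: "e \<in> F \<Longrightarrow> ends e = {a,b} \<Longrightarrow> reach ends F a b"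
  unfolding reach_def by auto

lemma reach_edge: "e \<in> F \<Longrightarrow> a \<in> ends e \<Longrightarrow> b \<in> ends e \<Longrightarrow> card (ends e) = 2 \<Longrightarrow> reach ends F a b"
proof (cases "a = b")
  case False
  assume "e \<in> F" "a \<in> ends e" "b \<in> ends e" "card (ends e) = 2"
  then obtain c d where "c \<noteq> d" "ends e = {c,d}" using card2_ends by blast
  then have "ends e = {a, b}" using False \<open>a \<in> ends e\<close> \<open>b \<in> ends e\<close> by fastforce
  then show ?thesis using \<open>e \<in> F\<close> reach_edge2 by metis
qed simp

lemma line_edgesD: "{x,y} \<in> line_edges V ends \<Longrightarrow> x \<noteq> y \<Longrightarrow> x \<in> V \<and> y \<in> V \<and> ends x \<inter> ends y \<noteq> {}"
proof -
  assume a: "{x,y} \<in> line_edges V ends" "x \<noteq> y"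
  then obtain e f where ef: "{x,y} = {e,f}" "e\<in>V" "f\<in>V" "ends e \<inter> ends f \<noteq> {}"
    unfolding line_edges_def by blast
  then have "(x=e \<and> y=f) \<or> (x=f \<and> y=e)" by (simp add: doubleton_eq_iff)
  then show ?thesis using ef by blast
qed

lemma line_edgesI: "x \<in> V \<Longrightarrow> y \<in> V \<Longrightarrow> x \<noteq> y \<Longrightarrow> ends x \<inter> ends y \<noteq> {} \<Longrightarrow> {x,y} \<in> line_edges V ends"
  unfolding line_edges_def by blast

lemma line_edges_elem: "f \<in> line_edges V ends \<Longrightarrow> \<exists>x y. f = {x,y} \<and> x \<noteq> y \<and> x \<in> V \<and> y \<in> V \<and> ends x \<inter> ends y \<noteq> {}"
  unfolding line_edges_def by blast

locale mg =
  fixes VH :: "nat set" and V :: "'a set" and ends :: "'a \<Rightarrow> nat set"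
  assumes mgr: "multigraph VH V ends"
begin

lemma finV: "finite V" using mgr unfolding multigraph_def by auto
lemma finVH: "finite VH" using mgr unfolding multigraph_def by auto
lemma ends_card: "e \<in> V \<Longrightarrow> card (ends e) = 2" using mgr unfolding multigraph_def by auto
lemma ends_sub: "e \<in> V \<Longrightarrow> ends e \<subseteq> VH" using mgr unfolding multigraph_def by auto
lemma ends_two: "e \<in> V \<Longrightarrow> \<exists>a b. a \<noteq> b \<and> ends e = {a, b}"
  using ends_card card2_ends by blast
lemma ends_ne: "e \<in> V \<Longrightarrow> ends e \<noteq> {}" using ends_two by blast
lemma ends_fin: "e \<in> V \<Longrightarrow> finite (ends e)" using ends_two by fastforce

lemma reach_edgeV: "e \<in> F \<Longrightarrow> F \<subseteq> V \<Longrightarrow> a \<in> ends e \<Longrightarrow> b \<in> ends e \<Longrightarrow> reach ends F a b"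
proof -
  assume a: "e \<in> F" "F \<subseteq> V" "a \<in> ends e" "b \<in> ends e"
  then have "card (ends e) = 2" using ends_card by blast
  then show ?thesis using reach_edge a by metis
qed

lemma chain_reach:
  assumes "xs \<noteq> []" "set xs \<subseteq> V"
    "\<forall>i. Suc i < length xs \<longrightarrow> ends (xs!i) \<inter> ends (xs ! Suc i) \<noteq> {}"
    "y \<in> ends (hd xs)" "z \<in> ends (last xs)"
  shows "reach ends (set xs) y z"
  using assms
proof (induction xs arbitrary: y)
  case Nil then show ?case by simp
next
  case (Cons x xs)
  show ?case
  proof (cases "xs = []")
    case True
    have "x \<in> V" using Cons.prems(2) by simp
    moreover have "y \<in> ends x" "z \<in> ends x" using Cons.prems(4,5) True by simp_all
    ultimately have "reach ends (set [x]) y z" using reach_edgeV[of x "set [x]" y z] by simp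
    then show ?thesis using True by simp
  next
    case False
    have "ends (hd (x#xs)) \<inter> ends (hd xs) \<noteq> {}" using Cons.prems(3)[rule_format, of 0] False
      by (simp add: hd_conv_nth)
    then obtain w where w: "w \<in> ends x" "w \<in> ends (hd xs)" by auto
    have ch: "\<forall>i. Suc i < length xs \<longrightarrow> ends (xs!i) \<inter> ends (xs ! Suc i) \<noteq> {}"
    proof (intro allI impI)
      fix i assume "Suc i < length xs"
      then show "ends (xs!i) \<inter> ends (xs ! Suc i) \<noteq> {}"
        using Cons.prems(3)[rule_format, of "Suc i"] by simp
    qed
    have "reach ends (set xs) w z"
      apply (rule Cons.IH[OF False _ ch w(2)])
      using Cons.prems(2,5) False by simp_all
    then have r2: "reach ends (set (x#xs)) w z" by (rule reach_mono) auto
    have "reach ends (set (x#xs)) y w"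
      using Cons.prems w by (intro reach_edgeV[of x]) auto
    then show ?thesis using r2 reach_trans by metis
  qed
qed

lemma path_set_V:
  assumes "is_path (line_edges V ends) p a b" "a \<in> V"
  shows "set p \<subseteq> V"
proof
  fix x assume "x \<in> set p"
  then obtain i where i: "i < length p" "p!i = x" by (auto simp: in_set_conv_nth)
  have d: "distinct p" and ed: "\<And>i. Suc i < length p \<Longrightarrow> {p ! i, p ! Suc i} \<in> line_edges V ends"
    and ne: "p \<noteq> []" and hd: "hd p = a"
    using assms(1) unfolding is_path_def by simp_all
  show "x \<in> V"
  proof (cases i)
    case 0
    then have "p!0 = a" using ne hd by (simp add: hd_conv_nth)
    then show ?thesis using 0 i assms(2) by blast
  next
    case (Suc j)
    have e1: "{p!j, p!Suc j} \<in> line_edges V ends" using ed i Suc by blast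
    have "p!j \<noteq> p!Suc j" using d i(1) Suc by (simp add: nth_eq_iff_index_eq)
    then have "p!Suc j \<in> V" using e1 line_edgesD by metis
    then show ?thesis using i Suc by simp
  qed
qed

end

context mg begin

lemma path_chain:
  assumes "is_path (line_edges V ends) p a b"
  shows "\<forall>i. Suc i < length p \<longrightarrow> ends (p!i) \<inter> ends (p ! Suc i) \<noteq> {}"
proof (intro allI impI)
  fix i assume i: "Suc i < length p"
  have d: "distinct p" and ed: "\<And>i. Suc i < length p \<Longrightarrow> {p ! i, p ! Suc i} \<in> line_edges V ends"
    using assms(1) unfolding is_path_def by simp_all
  have "{p!i, p!Suc i} \<in> line_edges V ends" using ed i by blast
  moreover have "p!i \<noteq> p!Suc i" using d i by (simp add: nth_eq_iff_index_eq)
  ultimately show "ends (p!i) \<inter> ends (p ! Suc i) \<noteq> {}" using line_edgesD by metis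
qed

lemma path_reach:
  assumes "is_path (line_edges V ends) p a b" "a \<in> V" "y \<in> ends a" "z \<in> ends b"
  shows "reach ends (set p) y z"
proof -
  have h: "p \<noteq> []" "hd p = a" "last p = b" using assms(1) unfolding is_path_def by simp_all
  have s: "set p \<subseteq> V" by (rule path_set_V[OF assms(1,2)])
  show ?thesis
    apply (rule chain_reach[of p y z])
    using h s path_chain[OF assms(1)] assms(3,4) by simp_all
qed

definition cyc_list :: "nat list \<Rightarrow> 'a list \<Rightarrow> bool" where
  "cyc_list vs es \<longleftrightarrow> length vs = length es \<and> length vs \<ge> 2 \<and> distinct vs \<and> distinct es \<and>
        set vs \<subseteq> VH \<and> set es \<subseteq> V \<and>
        (\<forall>i<length es. ends (es ! i) = {vs ! i, vs ! ((Suc i) mod length vs)})"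

lemma is_cycle_iff: "is_cycle VH V ends C \<longleftrightarrow> (\<exists>vs es. cyc_list vs es \<and> set es = C)"
  unfolding is_cycle_def cyc_list_def by blast

lemma mkcycle:
  assumes e: "e \<in> V" "ends e = {p, q}" "p \<noteq> q" and F: "F \<subseteq> V" "e \<notin> F"
    and r: "reach ends F p q"
  shows "\<exists>vs es. cyc_list vs es \<and> e \<in> set es \<and> set es \<subseteq> insert e F \<and>
     (\<exists>y\<in>set es. y \<noteq> e \<and> p \<in> ends y) \<and> (\<exists>y\<in>set es. y \<noteq> e \<and> q \<in> ends y) \<and>
     (length es = 2 \<longrightarrow> (\<exists>y\<in>F. ends y = {p,q} \<and> set es = {e,y}))"
proof -
  let ?R = "\<lambda>a b. \<exists>e\<in>F. ends e = {a, b}"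
  obtain xs0 where x0: "rtrancl_path ?R p xs0 q" using r unfolding reach_def rtranclp_eq_rtrancl_path by blast
  obtain xs where xs: "rtrancl_path ?R p xs q" "distinct (p # xs)" "set xs \<subseteq> set xs0"
    using x0 by (rule rtrancl_path_distinct)
  have xsne: "xs \<noteq> []" using xs(1) e(3) by (cases rule: rtrancl_path.cases) auto
  define m where "m = length xs"
  have m1: "m \<ge> 1" using xsne m_def by (cases xs) auto
  define vs where "vs = p # xs"
  have lvs: "length vs = Suc m" using vs_def m_def by simp
  have lastq: "vs ! m = q" using rtrancl_path_last[OF xs(1) xsne] xsne unfolding vs_def m_def
    by (simp add: last_conv_nth)
  have step: "\<And>i. i < m \<Longrightarrow> \<exists>f\<in>F. ends f = {vs!i, vs!Suc i}"
  proof -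
    fix i assume "i < m"
    then have "?R ((p # xs) ! i) (xs ! i)" using rtrancl_path_nth[OF xs(1)] m_def by blast
    then show "\<exists>f\<in>F. ends f = {vs!i, vs!Suc i}" unfolding vs_def by simp
  qed
  define g where "g i = (SOME f. f \<in> F \<and> ends f = {vs!i, vs!Suc i})" for i
  have g: "\<And>i. i < m \<Longrightarrow> g i \<in> F \<and> ends (g i) = {vs!i, vs!Suc i}"
  proof -
    fix i assume "i < m"
    then show "g i \<in> F \<and> ends (g i) = {vs!i, vs!Suc i}"
      unfolding g_def using step[of i] by (metis (mono_tags, lifting) someI_ex)
  qed
  define es where "es = map g [0..<m] @ [e]"
  have les: "length es = Suc m" using es_def by simp
  have esi: "\<And>i. i < m \<Longrightarrow> es ! i = g i" unfolding es_def by (simp add: nth_append)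
  have esm: "es ! m = e" unfolding es_def by (simp add: nth_append)
  have dvs: "distinct vs" using xs(2) vs_def by simp
  have ginj: "\<And>i j. i < m \<Longrightarrow> j < m \<Longrightarrow> g i = g j \<Longrightarrow> i = j"
  proof -
    fix i j assume ij: "i < m" "j < m" "g i = g j"
    then have eq: "{vs!i, vs!Suc i} = {vs!j, vs!Suc j}" using g by metis
    have "vs!i = vs!j \<or> (vs!i = vs!Suc j \<and> vs!Suc i = vs!j)" using eq by (auto simp: doubleton_eq_iff)
    then show "i = j"
    proof
      assume "vs!i = vs!j" then show ?thesis using dvs ij lvs by (simp add: nth_eq_iff_index_eq)
    next
      assume a: "vs!i = vs!Suc j \<and> vs!Suc i = vs!j"
      have "i = Suc j" using nth_eq_iff_index_eq[OF dvs, of i "Suc j"] a ij lvs by simp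
      moreover have "Suc i = j" using nth_eq_iff_index_eq[OF dvs, of "Suc i" j] a ij lvs by simp
      ultimately show ?thesis by arith
    qed
  qed
  have des: "distinct es"
  proof -
    have "distinct (map g [0..<m])" by (simp add: distinct_map inj_on_def ginj)
    moreover have "e \<notin> set (map g [0..<m])" using g F(2) by auto
    ultimately show ?thesis unfolding es_def by simp
  qed
  have setes: "set es = insert e (g ` {0..<m})" unfolding es_def by auto
  have gF: "g ` {0..<m} \<subseteq> F" using g by auto
  have vsVH: "set vs \<subseteq> VH"
  proof
    fix x assume "x \<in> set vs"
    then obtain i where i: "i < Suc m" "vs!i = x" using lvs by (auto simp: in_set_conv_nth)
    show "x \<in> VH"
    proof (cases "i < m")
      case True
      then have "x \<in> ends (g i)" using g i by auto
      moreover have "g i \<in> V" using g True F(1) by auto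
      ultimately show ?thesis using ends_sub by blast
    next
      case False
      then have "i = m" using i by simp
      then have "x = q" using i lastq by simp
      then show ?thesis using e ends_sub by blast
    qed
  qed
  have endsok: "\<forall>i<length es. ends (es ! i) = {vs ! i, vs ! ((Suc i) mod length vs)}"
  proof (intro allI impI)
    fix i assume "i < length es"
    then have i: "i < Suc m" using les by simp
    show "ends (es ! i) = {vs ! i, vs ! ((Suc i) mod length vs)}"
    proof (cases "i < m")
      case True
      then show ?thesis using esi g lvs by simp
    next
      case False
      then have "i = m" using i by simp
      moreover have "vs ! 0 = p" unfolding vs_def by simp
      ultimately show ?thesis using esm lastq e(2) lvs by (simp add: insert_commute)
    qed
  qed
  have cl: "cyc_list vs es"
    unfolding cyc_list_def using lvs les m1 dvs des vsVH setes gF F(1) e(1) endsok by auto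
  have yp: "\<exists>y\<in>set es. y \<noteq> e \<and> p \<in> ends y"
  proof
    show "es!0 \<in> set es" using les by simp
    have "es!0 = g 0" using esi m1 by simp
    moreover have "vs!0 = p" unfolding vs_def by simp
    ultimately show "es!0 \<noteq> e \<and> p \<in> ends (es!0)" using g[of 0] m1 F(2) by auto
  qed
  have yq: "\<exists>y\<in>set es. y \<noteq> e \<and> q \<in> ends y"
  proof
    show "es!(m-1) \<in> set es" using les by simp
    have "es!(m-1) = g (m-1)" using esi m1 by simp
    moreover have "Suc (m-1) = m" using m1 by simp
    ultimately show "es!(m-1) \<noteq> e \<and> q \<in> ends (es!(m-1))" using g[of "m-1"] m1 F(2) lastq by auto
  qed
  have l2: "length es = 2 \<longrightarrow> (\<exists>y\<in>F. ends y = {p,q} \<and> set es = {e,y})"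
  proof
    assume "length es = 2"
    then have m: "m = 1" using les by simp
    have "g 0 \<in> F" "ends (g 0) = {vs!0, vs!1}" using g[of 0] m by auto
    moreover have "vs!0 = p" "vs!1 = q" using lastq m unfolding vs_def by simp_all
    moreover have "set es = {e, g 0}" using setes m by auto
    ultimately show "\<exists>y\<in>F. ends y = {p,q} \<and> set es = {e,y}" by auto
  qed
  show ?thesis using cl setes gF yp yq l2 by blast
qed

end

context mg begin

lemma cyc_ends: "cyc_list vs es \<Longrightarrow> i < length es \<Longrightarrow> ends (es ! i) = {vs ! i, vs ! ((Suc i) mod length vs)}"
  unfolding cyc_list_def by blast

lemma cyc_len: "cyc_list vs es \<Longrightarrow> length vs = length es"
  unfolding cyc_list_def by blast
lemma cyc_len2: "cyc_list vs es \<Longrightarrow> length es \<ge> 2"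
  unfolding cyc_list_def by auto
lemma cyc_dist: "cyc_list vs es \<Longrightarrow> distinct vs \<and> distinct es"
  unfolding cyc_list_def by blast
lemma cyc_V: "cyc_list vs es \<Longrightarrow> set es \<subseteq> V"
  unfolding cyc_list_def by blast
lemma cyc_VH: "cyc_list vs es \<Longrightarrow> set vs \<subseteq> VH"
  unfolding cyc_list_def by blast

lemma cyc_card: "cyc_list vs es \<Longrightarrow> card (set es) = length es"
  using cyc_dist distinct_card by blast

lemma cyc_ends_in: assumes "cyc_list vs es" "x \<in> set es" shows "ends x \<subseteq> set vs"
proof -
  obtain i where i: "i < length es" "es!i = x" using assms(2) by (auto simp: in_set_conv_nth)
  have l: "length vs = length es" using cyc_len[OF assms(1)] .
  have "ends x = {vs ! i, vs ! ((Suc i) mod length vs)}" using cyc_ends[OF assms(1) i(1)] i(2) by simp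
  moreover have "0 < length vs" using i(1) l by linarith
  then have "(Suc i) mod length vs < length vs" by simp
  ultimately show ?thesis using i(1) l by auto
qed

lemma cyc_arc:
  assumes c: "cyc_list vs es" and ij: "i \<le> j" "j < length vs"
  shows "reach ends ((!) es ` {i..<j}) (vs!i) (vs!j)"
  using ij
proof (induction j)
  case 0 then show ?case by simp
next
  case (Suc j)
  show ?case
  proof (cases "i = Suc j")
    case True then show ?thesis by simp
  next
    case False
    then have ij': "i \<le> j" "j < length vs" using Suc.prems by auto
    have r1: "reach ends ((!) es ` {i..<Suc j}) (vs!i) (vs!j)"
      using Suc.IH[OF ij'] by (rule reach_mono) auto
    have l: "length vs = length es" using cyc_len[OF c] .
    have "ends (es!j) = {vs!j, vs!Suc j}" using cyc_ends[OF c, of j] Suc.prems l by simp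
    moreover have "es!j \<in> (!) es ` {i..<Suc j}" using ij' by auto
    ultimately have "reach ends ((!) es ` {i..<Suc j}) (vs!j) (vs!Suc j)" by (rule reach_edge2[rotated])
    then show ?thesis using r1 reach_trans by metis
  qed
qed

lemma cyc_conn:
  assumes c: "cyc_list vs es" and a: "a \<in> set vs" "b \<in> set vs"
  shows "reach ends (set es) a b"
proof -
  have z: "\<And>x. x \<in> set vs \<Longrightarrow> reach ends (set es) (vs!0) x"
  proof -
    fix x assume "x \<in> set vs"
    then obtain i where i: "i < length vs" "vs!i = x" by (auto simp: in_set_conv_nth)
    have "reach ends ((!) es ` {0..<i}) (vs!0) (vs!i)" using cyc_arc[OF c, of 0 i] i by simp
    moreover have "(!) es ` {0..<i} \<subseteq> set es" using i cyc_len[OF c] by auto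
    ultimately show "reach ends (set es) (vs!0) x" using i(2) reach_mono by metis
  qed
  show ?thesis using z[OF a(1)] z[OF a(2)] reach_sym reach_trans by metis
qed

lemma cyc_two_edges:
  assumes c: "cyc_list vs es" and w: "w \<in> set vs"
  shows "\<exists>e1 e2. e1 \<in> set es \<and> e2 \<in> set es \<and> e1 \<noteq> e2 \<and> w \<in> ends e1 \<and> w \<in> ends e2"
proof -
  obtain i where i: "i < length vs" "vs!i = w" using w by (auto simp: in_set_conv_nth)
  define k where "k = length vs"
  have l: "length es = k" using cyc_len[OF c] k_def by simp
  have k2: "k \<ge> 2" using cyc_len2[OF c] l by simp
  define j where "j = (i + k - 1) mod k"
  have jk: "j < k" using k2 j_def by simp
  have sj: "Suc j mod k = i"
  proof (cases "i = 0")
    case True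
    then have "j = k - 1" using j_def k2 by simp
    then show ?thesis using True k2 by simp
  next
    case False
    then have "j = i - 1" using j_def i k_def by (simp add: mod_if)
    then show ?thesis using False i k_def by simp
  qed
  have e1: "w \<in> ends (es!i)" using cyc_ends[OF c, of i] i l k_def by simp
  have e2: "w \<in> ends (es!j)" using cyc_ends[OF c, of j] jk l sj i k_def by simp
  have "j \<noteq> i"
  proof
    assume "j = i"
    then have "Suc i mod k = i" using sj by simp
    show False
    proof (cases "Suc i < k")
      case True then show False using \<open>Suc i mod k = i\<close> by simp
    next
      case False then have "Suc i = k" using i k_def by simp
      then show False using \<open>Suc i mod k = i\<close> k2 by simp
    qed
  qed
  then have "es!i \<noteq> es!j" using cyc_dist[OF c] i jk l k_def by (simp add: nth_eq_iff_index_eq)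
  then show ?thesis using e1 e2 i jk l k_def by (metis nth_mem)
qed

lemma cyc_rotate:
  assumes c: "cyc_list vs es"
  shows "cyc_list (rotate s vs) (rotate s es)"
proof -
  define k where "k = length vs"
  have l: "length es = k" using cyc_len[OF c] k_def by simp
  have k2: "k \<ge> 2" using cyc_len2[OF c] l by simp
  have "\<forall>i<length (rotate s es). ends (rotate s es ! i) = {rotate s vs ! i, rotate s vs ! ((Suc i) mod length (rotate s vs))}"
  proof (intro allI impI)
    fix i assume "i < length (rotate s es)"
    then have i: "i < k" using l by simp
    have "rotate s es ! i = es ! ((s + i) mod k)" using rotate_conv_mod l i
      by (simp add: nth_rotate)
    moreover have "rotate s vs ! i = vs ! ((s + i) mod k)" using i k_def by (simp add: nth_rotate)
    moreover have "Suc i mod k < k" using k2 by simp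
    then have "rotate s vs ! ((Suc i) mod k) = vs ! ((s + (Suc i) mod k) mod k)"
      using k2 k_def by (simp add: nth_rotate)
    moreover have "(s + (Suc i) mod k) mod k = Suc ((s + i) mod k) mod k"
      by (simp add: mod_add_right_eq mod_Suc_eq)
    moreover have "(s + i) mod k < k" using k2 by simp
    ultimately show "ends (rotate s es ! i) = {rotate s vs ! i, rotate s vs ! ((Suc i) mod length (rotate s vs))}"
      using cyc_ends[OF c, of "(s + i) mod k"] l k_def by simp
  qed
  then show ?thesis using c unfolding cyc_list_def by simp
qed

lemma cyc_ends_inj:
  assumes c: "cyc_list vs es" and k3: "length es \<ge> 3" and ij: "i < length es" "j < length es"
    and eq: "ends (es!i) = ends (es!j)"
  shows "i = j"
proof -
  define k where "k = length vs"
  have l: "length es = k" using cyc_len[OF c] k_def by simp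
  have d: "distinct vs" using cyc_dist[OF c] by simp
  have "{vs!i, vs!(Suc i mod k)} = {vs!j, vs!(Suc j mod k)}"
    using eq cyc_ends[OF c, of i] cyc_ends[OF c, of j] ij l k_def by simp
  then have "(vs!i = vs!j \<and> vs!(Suc i mod k) = vs!(Suc j mod k)) \<or> (vs!i = vs!(Suc j mod k) \<and> vs!(Suc i mod k) = vs!j)"
    by (auto simp: doubleton_eq_iff)
  moreover have mk: "Suc i mod k < k" "Suc j mod k < k" using ij l by simp_all
  ultimately have "i = j \<or> (i = Suc j mod k \<and> Suc i mod k = j)"
    using nth_eq_iff_index_eq[OF d] ij l k_def by metis
  then show ?thesis
  proof
    assume a: "i = Suc j mod k \<and> Suc i mod k = j"
    have jk: "j < k" using ij l by simp
    show ?thesis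
    proof (cases "Suc j < k")
      case True
      then have "i = Suc j" using a by simp
      moreover have "Suc i mod k = j" using a by blast
      ultimately have s2: "Suc (Suc j) mod k = j" by simp
      show ?thesis
      proof (cases "Suc (Suc j) < k")
        case True then show ?thesis using s2 by simp
      next
        case False
        then have "Suc (Suc j) = k" using \<open>Suc j < k\<close> by simp
        then show ?thesis using s2 k3 l by simp
      qed
    next
      case False
      then have "Suc j = k" using jk by simp
      then have "i = 0" using a by simp
      moreover have "Suc i mod k = j" using a by blast
      ultimately have "Suc 0 mod k = j" by simp
      then have "j = 1" using k3 l by simp
      then show ?thesis using \<open>Suc j = k\<close> k3 l by simp
    qed
  qed
qed

end

lemma path_edges_rev: "path_edges (rev p) = path_edges p"
proof -
  have a: "path_edges (rev p) \<subseteq> path_edges p" if "True" for p :: "'b list"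
  proof
    fix f assume "f \<in> path_edges (rev p)"
    then obtain i where i: "Suc i < length p" "f = {rev p ! i, rev p ! Suc i}"
      unfolding path_edges_def by auto
    define j where "j = length p - 2 - i"
    have "rev p ! i = p ! Suc j" using i j_def by (simp add: rev_nth Suc_diff_Suc)
    moreover have "rev p ! Suc i = p ! j" using i j_def by (simp add: rev_nth)
    moreover have "Suc j < length p" using i j_def by simp
    ultimately show "f \<in> path_edges p" unfolding path_edges_def using i
      by (auto simp: insert_commute)
  qed
  show ?thesis using a[of p] a[of "rev p"] by auto
qed

lemma is_path_rev:
  assumes "is_path E p a b" shows "is_path E (rev p) b a"
proof -
  have h: "p \<noteq> []" "hd p = a" "last p = b" "distinct p"
    "\<And>i. Suc i < length p \<Longrightarrow> {p ! i, p ! Suc i} \<in> E" using assms unfolding is_path_def by auto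
  have "\<And>i. Suc i < length (rev p) \<Longrightarrow> {rev p ! i, rev p ! Suc i} \<in> E"
  proof -
    fix i assume i: "Suc i < length (rev p)"
    define j where "j = length p - 2 - i"
    have "rev p ! i = p ! Suc j" using i j_def by (simp add: rev_nth Suc_diff_Suc)
    moreover have "rev p ! Suc i = p ! j" using i j_def by (simp add: rev_nth)
    moreover have "Suc j < length p" using i j_def by simp
    ultimately show "{rev p ! i, rev p ! Suc i} \<in> E" using h(5)[of j] by (simp add: insert_commute)
  qed
  then show ?thesis using h unfolding is_path_def by (simp add: hd_rev last_rev)
qed

lemma path_len2: "is_path E p a b \<Longrightarrow> a \<noteq> b \<Longrightarrow> length p \<ge> 2"
  unfolding is_path_def
  by (metis One_nat_def Suc_1 hd_conv_nth last_conv_nth diff_Suc_1 le_less_linear less_2_cases length_0_conv)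

lemma pe_first: assumes "is_path E p a b" "length p \<ge> 2" shows "{a, p!1} \<in> path_edges p"
proof -
  have "p \<noteq> []" "hd p = a" using assms unfolding is_path_def by simp_all
  then have "p!0 = a" by (metis hd_conv_nth)
  then show ?thesis unfolding path_edges_def using assms(2)
    by (auto intro!: exI[of _ 0])
qed

lemma pe_last: assumes "is_path E p a b" "length p \<ge> 2" shows "{p!(length p - 2), b} \<in> path_edges p"
proof -
  have "p \<noteq> []" "last p = b" using assms unfolding is_path_def by simp_all
  then have "p!(length p - 1) = b" by (metis last_conv_nth)
  moreover have "Suc (length p - 2) = length p - 1" using assms(2) by simp
  ultimately show ?thesis unfolding path_edges_def using assms(2)
    by (auto intro!: exI[of _ "length p - 2"])
qed

lemma pe_internal:
  assumes "is_path E p a b" "x \<in> set p" "x \<noteq> a" "x \<noteq> b"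
  shows "\<exists>f1 f2. f1 \<in> path_edges p \<and> f2 \<in> path_edges p \<and> f1 \<noteq> f2 \<and> x \<in> f1 \<and> x \<in> f2"
proof -
  have h: "p \<noteq> []" "hd p = a" "last p = b" "distinct p" using assms unfolding is_path_def by auto
  obtain i where i: "i < length p" "p!i = x" using assms(2) by (auto simp: in_set_conv_nth)
  have "i \<noteq> 0" using i h assms(3) by (metis hd_conv_nth)
  moreover have "i \<noteq> length p - 1" using i h assms(4) by (metis last_conv_nth)
  ultimately have i2: "0 < i" "Suc i < length p" using i by auto
  define f1 where "f1 = {p!(i-1), p!i}"
  define f2 where "f2 = {p!i, p!Suc i}"
  have "f1 \<in> path_edges p" unfolding path_edges_def f1_def using i2
    by (auto intro!: exI[of _ "i - 1"])
  moreover have "f2 \<in> path_edges p" unfolding path_edges_def f2_def using i2 by auto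
  moreover have "p!(i-1) \<noteq> p!Suc i" using h(4) i2 by (simp add: nth_eq_iff_index_eq)
  moreover have "p!(i-1) \<noteq> p!i" using h(4) i2 by (simp add: nth_eq_iff_index_eq)
  ultimately have "f1 \<noteq> f2" "f1 \<in> path_edges p" "f2 \<in> path_edges p" unfolding f1_def f2_def
    by (auto simp: doubleton_eq_iff)
  then show ?thesis using i f1_def f2_def by blast
qed

lemma pe_sub: "is_path E p a b \<Longrightarrow> path_edges p \<subseteq> E"
  unfolding is_path_def path_edges_def by auto

lemma set_rev_path: "set (rev p) = set p" by simp

lemma finite_path_edges: "finite (path_edges p)"
proof -
  have "path_edges p = (\<lambda>i. {p!i, p!Suc i}) ` {i. Suc i < length p}" unfolding path_edges_def by auto
  moreover have "finite {i. Suc i < length p}" by (rule finite_subset[of _ "{..<length p}"]) auto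
  ultimately show ?thesis by simp
qed

context mg begin

lemma Gdeg:
  assumes x: "x \<in> V" and deg3: "\<And>w. card {e\<in>V. w \<in> ends e} \<le> 3"
  shows "finite {f\<in>line_edges V ends. x \<in> f} \<and> card {f\<in>line_edges V ends. x \<in> f} \<le> 4"
proof -
  obtain p q where pq: "p \<noteq> q" "ends x = {p,q}" using ends_two[OF x] by blast
  define A where "A = {e\<in>V. p \<in> ends e} - {x}"
  define B where "B = {e\<in>V. q \<in> ends e} - {x}"
  have fA: "finite A" "finite B" using finV unfolding A_def B_def by auto
  have "card {e\<in>V. p \<in> ends e} \<le> 3" by (rule deg3)
  moreover have "x \<in> {e\<in>V. p \<in> ends e}" using x pq by auto
  ultimately have cA: "card A \<le> 2" unfolding A_def using finV by (simp add: card_Diff_singleton)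
  have "card {e\<in>V. q \<in> ends e} \<le> 3" by (rule deg3)
  moreover have "x \<in> {e\<in>V. q \<in> ends e}" using x pq by auto
  ultimately have cB: "card B \<le> 2" unfolding B_def using finV by (simp add: card_Diff_singleton)
  have sub: "{f\<in>line_edges V ends. x \<in> f} \<subseteq> (\<lambda>y. {x,y}) ` (A \<union> B)"
  proof
    fix f assume f: "f \<in> {f\<in>line_edges V ends. x \<in> f}"
    then obtain a b where ab: "f = {a,b}" "a \<noteq> b" "a \<in> V" "b \<in> V" "ends a \<inter> ends b \<noteq> {}"
      using line_edges_elem by blast
    have "x = a \<or> x = b" using f ab by auto
    then obtain y where y: "f = {x,y}" "y \<noteq> x" "y \<in> V" "ends x \<inter> ends y \<noteq> {}"
      using ab by (metis insert_commute inf_commute)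
    then have "y \<in> A \<union> B" unfolding A_def B_def using pq by auto
    then show "f \<in> (\<lambda>y. {x,y}) ` (A \<union> B)" using y by blast
  qed
  have "card ((\<lambda>y. {x,y}) ` (A \<union> B)) \<le> card (A \<union> B)" using fA by (simp add: card_image_le)
  also have "\<dots> \<le> card A + card B" by (rule card_Un_le)
  finally have "card ((\<lambda>y. {x,y}) ` (A \<union> B)) \<le> 4" using cA cB by simp
  moreover have "finite ((\<lambda>y. {x,y}) ` (A \<union> B))" using fA by simp
  ultimately show ?thesis using sub card_mono finite_subset by (metis (no_types, lifting) le_trans)
qed

end

locale imm = mg +
  fixes phi :: "nat \<Rightarrow> 'a" and P :: "nat \<Rightarrow> nat \<Rightarrow> 'a list"
  assumes deg3: "\<And>w. card {e\<in>V. w \<in> ends e} \<le> 3"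
    and inj: "inj_on phi {..<4}" and phiV: "phi ` {..<4} \<subseteq> V"
    and paths: "\<And>i j. i < j \<Longrightarrow> j < 4 \<Longrightarrow> is_path (line_edges V ends) (P i j) (phi i) (phi j)"
    and disj: "\<And>i j i' j'. i < j \<Longrightarrow> j < 4 \<Longrightarrow> i' < j' \<Longrightarrow> j' < 4 \<Longrightarrow> (i, j) \<noteq> (i', j') \<Longrightarrow>
            path_edges (P i j) \<inter> path_edges (P i' j') = {}"
begin

definition Q :: "nat \<Rightarrow> nat \<Rightarrow> 'a list" where
  "Q i j = (if i < j then P i j else rev (P j i))"

definition inc :: "'a \<Rightarrow> nat \<Rightarrow> nat \<Rightarrow> 'a set set" where
  "inc x i j = {f \<in> path_edges (P i j). x \<in> f}"

definition Pairs :: "(nat \<times> nat) set" where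
  "Pairs = {(i,j). i < j \<and> j < 4}"

lemma Pairs_fin: "finite Pairs"
proof -
  have "Pairs \<subseteq> {..<4} \<times> {..<4}" unfolding Pairs_def by auto
  then show ?thesis by (rule finite_subset) auto
qed

lemma phi_V: "i < 4 \<Longrightarrow> phi i \<in> V" using phiV by auto
lemma phi_inj: "i < 4 \<Longrightarrow> j < 4 \<Longrightarrow> phi i = phi j \<Longrightarrow> i = j" using inj by (auto simp: inj_on_def)

lemma Q_path: assumes "i < 4" "j < 4" "i \<noteq> j" shows "is_path (line_edges V ends) (Q i j) (phi i) (phi j)"
proof (cases "i < j")
  case True then show ?thesis unfolding Q_def using paths assms by simp
next
  case False
  then have "j < i" using assms by simp
  then have "is_path (line_edges V ends) (P j i) (phi j) (phi i)" using paths assms by simp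
  then show ?thesis unfolding Q_def using False is_path_rev by simp
qed

lemma inc_fin: "finite (inc x i j)"
  unfolding inc_def by (rule finite_subset[OF _ finite_path_edges]) auto

lemma Q_set: "set (Q i j) = set (P (min i j) (max i j))"
  unfolding Q_def by (cases "i < j") (auto simp: min_def max_def)

lemma Q_pe: "path_edges (Q i j) = path_edges (P (min i j) (max i j))"
  unfolding Q_def by (cases "i < j") (auto simp: min_def max_def path_edges_rev)

lemma sum_le:
  assumes x: "x \<in> V"
  shows "(\<Sum>\<pi>\<in>Pairs. card (inc x (fst \<pi>) (snd \<pi>))) \<le> 4"
proof -
  let ?A = "\<lambda>\<pi>. inc x (fst \<pi>) (snd \<pi>)"
  have fin: "\<forall>\<pi>\<in>Pairs. finite (?A \<pi>)" using inc_fin by auto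
  have dj: "\<forall>\<pi>\<in>Pairs. \<forall>\<rho>\<in>Pairs. \<pi> \<noteq> \<rho> \<longrightarrow> ?A \<pi> \<inter> ?A \<rho> = {}"
    unfolding inc_def Pairs_def using disj by fastforce
  have "card (\<Union>(?A ` Pairs)) = (\<Sum>\<pi>\<in>Pairs. card (?A \<pi>))"
    by (rule card_UN_disjoint[OF Pairs_fin fin dj])
  moreover have "\<Union>(?A ` Pairs) \<subseteq> {f\<in>line_edges V ends. x \<in> f}"
    unfolding inc_def Pairs_def using paths pe_sub by fastforce
  moreover have "finite {f\<in>line_edges V ends. x \<in> f} \<and> card {f\<in>line_edges V ends. x \<in> f} \<le> 4"
    by (rule Gdeg[OF x deg3])
  ultimately show ?thesis using card_mono[of "{f\<in>line_edges V ends. x \<in> f}" "\<Union>(?A ` Pairs)"] by linarith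
qed

lemma inc_ge1:
  assumes "(i,j) \<in> Pairs" "x \<in> set (P i j)"
  shows "card (inc x i j) \<ge> 1"
proof -
  have ij: "i < j" "j < 4" using assms(1) unfolding Pairs_def by auto
  have pth: "is_path (line_edges V ends) (P i j) (phi i) (phi j)" using paths ij by blast
  have ne: "phi i \<noteq> phi j" using phi_inj[of i j] ij by auto
  have l2: "length (P i j) \<ge> 2" using path_len2[OF pth ne] .
  have "\<exists>f. f \<in> inc x i j"
  proof (cases "x = phi i")
    case True then show ?thesis using pe_first[OF pth l2] unfolding inc_def by blast
  next
    case False
    show ?thesis
    proof (cases "x = phi j")
      case True then show ?thesis using pe_last[OF pth l2] unfolding inc_def by blast
    next
      case False
      then show ?thesis using pe_internal[OF pth assms(2) \<open>x \<noteq> phi i\<close>] unfolding inc_def by blast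
    qed
  qed
  moreover have "finite (inc x i j)" by (rule inc_fin)
  ultimately show ?thesis by (metis One_nat_def Suc_leI card_gt_0_iff empty_iff)
qed

lemma inc_ge2:
  assumes "(i,j) \<in> Pairs" "x \<in> set (P i j)" "x \<noteq> phi i" "x \<noteq> phi j"
  shows "card (inc x i j) \<ge> 2"
proof -
  have ij: "i < j" "j < 4" using assms(1) unfolding Pairs_def by auto
  have pth: "is_path (line_edges V ends) (P i j) (phi i) (phi j)" using paths ij by blast
  obtain f1 f2 where f: "f1 \<in> inc x i j" "f2 \<in> inc x i j" "f1 \<noteq> f2"
    using pe_internal[OF pth assms(2-4)] unfolding inc_def by blast
  moreover have "finite (inc x i j)" by (rule inc_fin)
  ultimately have "card {f1, f2} \<le> card (inc x i j)" by (intro card_mono) auto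
  then show ?thesis using f(3) by simp
qed

lemma sum_sub_ge:
  assumes "S \<subseteq> Pairs" "\<forall>\<pi>\<in>S. card (inc x (fst \<pi>) (snd \<pi>)) \<ge> k"
  shows "card S * k \<le> (\<Sum>\<pi>\<in>Pairs. card (inc x (fst \<pi>) (snd \<pi>)))"
proof -
  have fS: "finite S" using assms(1) Pairs_fin finite_subset by blast
  have "card S * k \<le> (\<Sum>\<pi>\<in>S. card (inc x (fst \<pi>) (snd \<pi>)))"
    using sum_bounded_below[of S k "\<lambda>\<pi>. card (inc x (fst \<pi>) (snd \<pi>))"] assms(2) by simp
  also have "\<dots> \<le> (\<Sum>\<pi>\<in>Pairs. card (inc x (fst \<pi>) (snd \<pi>)))"
    by (rule sum_mono2[OF Pairs_fin assms(1)]) auto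
  finally show ?thesis .
qed

lemma term_not_in:
  assumes m: "m < 4" and ij: "i < j" "j < 4" "m \<noteq> i" "m \<noteq> j"
  shows "phi m \<notin> set (P i j)"
proof
  assume inP: "phi m \<in> set (P i j)"
  define Pm where "Pm = (\<lambda>a. (min m a, max m a)) ` ({..<4} - {m})"
  have injm: "inj_on (\<lambda>a. (min m a, max m a)) ({..<4} - {m})"
    by (auto simp: inj_on_def min_def max_def split: if_splits)
  have cPm: "card Pm = 3" unfolding Pm_def using card_image[OF injm] m by simp
  have PmP: "Pm \<subseteq> Pairs" unfolding Pm_def Pairs_def using m by (auto simp: min_def max_def)
  have ijn: "(i,j) \<notin> Pm" unfolding Pm_def using ij by (auto simp: min_def max_def split: if_splits)
  define S where "S = insert (i,j) Pm"
  have SP: "S \<subseteq> Pairs" unfolding S_def using PmP ij Pairs_def by auto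
  have fPm: "finite Pm" using PmP Pairs_fin finite_subset by blast
  have cS: "card S = 4" unfolding S_def using ijn cPm card_insert_disjoint[OF fPm ijn] by simp
  have ge: "\<forall>\<pi>\<in>S. card (inc (phi m) (fst \<pi>) (snd \<pi>)) \<ge> 1"
  proof
    fix \<pi> assume "\<pi> \<in> S"
    then show "card (inc (phi m) (fst \<pi>) (snd \<pi>)) \<ge> 1"
    proof (cases "\<pi> = (i,j)")
      case True
      have "(i,j) \<in> Pairs" using ij unfolding Pairs_def by simp
      then show ?thesis using inc_ge1[of i j "phi m"] inP True by simp
    next
      case False
      then have "\<pi> \<in> Pm" using \<open>\<pi> \<in> S\<close> S_def by auto
      then obtain a where a: "a < 4" "a \<noteq> m" "\<pi> = (min m a, max m a)" unfolding Pm_def by auto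
      have "phi m \<in> set (P (min m a) (max m a))"
      proof (cases "m < a")
        case True
        then have "hd (P m a) = phi m" "P m a \<noteq> []" using paths[of m a] a unfolding is_path_def by auto
        then show ?thesis using True by (simp add: min_def max_def) (metis hd_in_set)
      next
        case False
        then have "a < m" using a by simp
        then have "last (P a m) = phi m" "P a m \<noteq> []" using paths[of a m] m unfolding is_path_def by auto
        then show ?thesis using False by (simp add: min_def max_def) (metis last_in_set)
      qed
      then show ?thesis using inc_ge1 a \<open>\<pi> \<in> Pm\<close> PmP by auto
    qed
  qed
  have "card (inc (phi m) i j) \<ge> 2"
    apply (rule inc_ge2)
    using ij inP phi_inj m Pairs_def by auto
  have "(\<Sum>\<pi>\<in>S. card (inc (phi m) (fst \<pi>) (snd \<pi>))) = card (inc (phi m) i j) + (\<Sum>\<pi>\<in>Pm. card (inc (phi m) (fst \<pi>) (snd \<pi>)))"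
    unfolding S_def using sum.insert[OF fPm ijn, of "\<lambda>\<pi>. card (inc (phi m) (fst \<pi>) (snd \<pi>))"] by simp
  moreover have "card Pm * 1 \<le> (\<Sum>\<pi>\<in>Pm. card (inc (phi m) (fst \<pi>) (snd \<pi>)))"
    using sum_bounded_below[of Pm 1 "\<lambda>\<pi>. card (inc (phi m) (fst \<pi>) (snd \<pi>))"] ge S_def by auto
  moreover have "(\<Sum>\<pi>\<in>S. card (inc (phi m) (fst \<pi>) (snd \<pi>))) \<le> (\<Sum>\<pi>\<in>Pairs. card (inc (phi m) (fst \<pi>) (snd \<pi>)))"
    by (rule sum_mono2[OF Pairs_fin SP]) auto
  moreover have "(\<Sum>\<pi>\<in>Pairs. card (inc (phi m) (fst \<pi>) (snd \<pi>))) \<le> 4"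
    by (rule sum_le[OF phi_V[OF m]])
  ultimately show False using \<open>card (inc (phi m) i j) \<ge> 2\<close> cPm by linarith
qed

lemma nonterm_le2:
  assumes x: "x \<in> V" "\<forall>m<4. x \<noteq> phi m" and S: "S \<subseteq> Pairs" "\<forall>\<pi>\<in>S. x \<in> set (P (fst \<pi>) (snd \<pi>))"
  shows "card S \<le> 2"
proof -
  have "\<forall>\<pi>\<in>S. card (inc x (fst \<pi>) (snd \<pi>)) \<ge> 2"
  proof
    fix \<pi> assume "\<pi> \<in> S"
    then obtain i j where ij: "\<pi> = (i,j)" "(i,j) \<in> Pairs" using S by (cases \<pi>) auto
    then have "i < 4" "j < 4" unfolding Pairs_def by auto
    then have "x \<noteq> phi i" "x \<noteq> phi j" using x(2) by auto
    moreover have "x \<in> set (P i j)" using S(2) \<open>\<pi> \<in> S\<close> ij by auto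
    ultimately show "card (inc x (fst \<pi>) (snd \<pi>)) \<ge> 2" using inc_ge2[of i j x] ij by simp
  qed
  then have "card S * 2 \<le> 4" using sum_sub_ge[OF S(1)] sum_le[OF x(1)] le_trans by blast
  then show ?thesis by simp
qed

end

lemma reach_exit:
  assumes "reach ends S y z" "y \<in> A" "z \<notin> A"
  shows "\<exists>s\<in>S. \<exists>w w'. ends s = {w,w'} \<and> w \<in> A \<and> w' \<notin> A \<and> reach ends {e\<in>S. ends e \<inter> A = {}} w' z"
  using assms unfolding reach_def
proof (induction rule: rtranclp_induct)
  case base then show ?case by simp
next
  case (step z' z)
  obtain e where e: "e \<in> S" "ends e = {z', z}" using step(2) by blast
  show ?case
  proof (cases "z' \<in> A")
    case True
    then show ?thesis using e step.prems by auto
  next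
    case False
    then obtain s w w' where s: "s \<in> S" "ends s = {w,w'}" "w \<in> A" "w' \<notin> A"
      "(\<lambda>a b. \<exists>e\<in>{e\<in>S. ends e \<inter> A = {}}. ends e = {a, b})\<^sup>*\<^sup>* w' z'"
      using step.IH step.prems by blast
    have "e \<in> {e\<in>S. ends e \<inter> A = {}}" using e False step.prems by auto
    then have "(\<lambda>a b. \<exists>e\<in>{e\<in>S. ends e \<inter> A = {}}. ends e = {a, b}) z' z" using e by blast
    then have "(\<lambda>a b. \<exists>e\<in>{e\<in>S. ends e \<inter> A = {}}. ends e = {a, b})\<^sup>*\<^sup>* w' z"
      by (rule rtranclp.rtrancl_into_rtrancl[OF s(5)])
    then show ?thesis using s by blast
  qed
qed

lemma is_path_tl:
  assumes "is_path E p a b" "length p \<ge> 2"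
  shows "is_path E (tl p) (p!1) b"
proof -
  have h: "p \<noteq> []" "hd p = a" "last p = b" "distinct p"
    "\<And>i. Suc i < length p \<Longrightarrow> {p ! i, p ! Suc i} \<in> E" using assms unfolding is_path_def by auto
  obtain x y r where p: "p = x # y # r" using assms(2)
    by (metis One_nat_def Suc_1 Suc_le_length_iff)
  have "tl p \<noteq> []" using p by simp
  moreover have "hd (tl p) = p!1" using p by simp
  moreover have "last (tl p) = b" using h p by simp
  moreover have "distinct (tl p)" using h by (simp add: distinct_tl)
  moreover have "\<And>i. Suc i < length (tl p) \<Longrightarrow> {tl p ! i, tl p ! Suc i} \<in> E"
    using h(5) by (simp add: nth_tl)
  ultimately show ?thesis unfolding is_path_def by simp
qed

context imm begin

definition nb :: "nat \<Rightarrow> nat \<Rightarrow> 'a" where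
  "nb m a = Q m a ! 1"

lemma Q_len: "m < 4 \<Longrightarrow> a < 4 \<Longrightarrow> a \<noteq> m \<Longrightarrow> length (Q m a) \<ge> 2"
  using path_len2[OF Q_path] phi_inj by metis

lemma nb_edge: assumes "m < 4" "a < 4" "a \<noteq> m"
  shows "{phi m, nb m a} \<in> path_edges (Q m a)"
  unfolding nb_def using pe_first[OF Q_path[OF assms(1,2) assms(3)[symmetric]] Q_len[OF assms]] .

lemma nb_props: assumes "m < 4" "a < 4" "a \<noteq> m"
  shows "nb m a \<in> V \<and> nb m a \<noteq> phi m \<and> ends (nb m a) \<inter> ends (phi m) \<noteq> {}"
proof -
  have pth: "is_path (line_edges V ends) (Q m a) (phi m) (phi a)" using Q_path assms by simp
  have "{phi m, nb m a} \<in> line_edges V ends" using nb_edge[OF assms] pe_sub[OF pth] by blast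
  moreover have "nb m a \<noteq> phi m"
  proof -
    have d: "distinct (Q m a)" "hd (Q m a) = phi m" "Q m a \<noteq> []" using pth unfolding is_path_def by auto
    have l: "length (Q m a) \<ge> 2" using Q_len assms by blast
    have "Q m a ! 0 = phi m" using d by (metis hd_conv_nth)
    moreover have "Q m a ! 1 \<noteq> Q m a ! 0" using nth_eq_iff_index_eq[OF d(1), of 1 0] l d(3) by simp
    ultimately show ?thesis unfolding nb_def by simp
  qed
  ultimately show ?thesis using line_edgesD by (metis inf_commute)
qed

lemma nb_inj: assumes "m < 4" "a < 4" "a \<noteq> m" "b < 4" "b \<noteq> m" "nb m a = nb m b" shows "a = b"
proof (rule ccontr)
  assume ab: "a \<noteq> b"
  have "{phi m, nb m a} \<in> path_edges (P (min m a) (max m a))" using nb_edge[OF assms(1-3)] Q_pe by simp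
  moreover have "{phi m, nb m b} \<in> path_edges (P (min m b) (max m b))" using nb_edge[OF assms(1,4,5)] Q_pe by simp
  moreover have "(min m a, max m a) \<noteq> (min m b, max m b)" using ab assms by (auto simp: min_def max_def)
  moreover have "min m a < max m a" "max m a < 4" "min m b < max m b" "max m b < 4" using assms
    by (auto simp: min_def max_def)
  ultimately show False using disj assms(6) by fastforce
qed

lemma tail_reach: assumes "m < 4" "a < 4" "a \<noteq> m" "y \<in> ends (nb m a)" "z \<in> ends (phi a)"
  shows "reach ends (V - {phi m}) y z"
proof -
  have pth: "is_path (line_edges V ends) (Q m a) (phi m) (phi a)" using Q_path assms by simp
  have l: "length (Q m a) \<ge> 2" using Q_len assms by blast
  have pt: "is_path (line_edges V ends) (tl (Q m a)) (nb m a) (phi a)"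
    using is_path_tl[OF pth l] unfolding nb_def .
  have nbV: "nb m a \<in> V" using nb_props assms by blast
  have r: "reach ends (set (tl (Q m a))) y z" by (rule path_reach[OF pt nbV assms(4,5)])
  have "set (tl (Q m a)) \<subseteq> V" using path_set_V[OF pt nbV] .
  moreover have "phi m \<notin> set (tl (Q m a))"
  proof -
    have "distinct (Q m a)" "hd (Q m a) = phi m" "Q m a \<noteq> []" using pth unfolding is_path_def by auto
    then show ?thesis by (cases "Q m a") auto
  qed
  ultimately show ?thesis using r reach_mono by (metis Diff_subset_conv insert_Diff_single insert_absorb subset_insert)
qed

lemma other_reach: assumes "m < 4" "a < 4" "b < 4" "a \<noteq> m" "b \<noteq> m" "a \<noteq> b"
   "y \<in> ends (phi a)" "z \<in> ends (phi b)"
  shows "reach ends (V - {phi m}) y z"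
proof -
  have pth: "is_path (line_edges V ends) (Q a b) (phi a) (phi b)" using Q_path assms by simp
  have r: "reach ends (set (Q a b)) y z" by (rule path_reach[OF pth phi_V assms(7,8)]) (use assms in simp)
  have "set (Q a b) \<subseteq> V" using path_set_V[OF pth phi_V] assms by simp
  moreover have "phi m \<notin> set (Q a b)" unfolding Q_set
    using term_not_in[of m "min a b" "max a b"] assms by (auto simp: min_def max_def)
  ultimately show ?thesis using r reach_mono by (metis Diff_subset_conv insert_Diff_single insert_absorb subset_insert)
qed

lemma step1:
  assumes m: "m < 4" and yz: "y \<in> ends (phi m)" "z \<in> ends (phi m)"
  shows "reach ends (V - {phi m}) y z"
proof (cases "y = z")
  case True then show ?thesis by simp
next
  case False
  have pmV: "phi m \<in> V" using phi_V m by blast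
  have eyz: "ends (phi m) = {y, z}" using ends_two[OF pmV] yz False by auto
  define Os where "Os = {..<4} - {m}"
  have cO: "card Os = 3" unfolding Os_def using m by simp
  have nbO: "\<And>a. a \<in> Os \<Longrightarrow> nb m a \<in> V \<and> nb m a \<noteq> phi m \<and> ends (nb m a) \<inter> ends (phi m) \<noteq> {}"
    using nb_props m unfolding Os_def by blast
  have injO: "inj_on (nb m) Os" unfolding inj_on_def Os_def using nb_inj m by blast
  show ?thesis
  proof (cases "\<exists>a\<in>Os. ends (nb m a) = {y,z}")
    case True
    then obtain a where a: "a \<in> Os" "ends (nb m a) = {y,z}" by blast
    have "nb m a \<in> V - {phi m}" using nbO[OF a(1)] by blast
    then show ?thesis using reach_edge2 a(2) by metis
  next
    case nopar: False
    have many: "\<And>u. u \<in> {y,z} \<Longrightarrow> \<exists>a\<in>Os. u \<notin> ends (nb m a)"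
    proof (rule ccontr)
      fix u assume u: "u \<in> {y,z}" "\<not> (\<exists>a\<in>Os. u \<notin> ends (nb m a))"
      have "insert (phi m) (nb m ` Os) \<subseteq> {e\<in>V. u \<in> ends e}" using u nbO eyz pmV by auto
      moreover have "card (insert (phi m) (nb m ` Os)) = 4"
      proof -
        have "phi m \<notin> nb m ` Os" using nbO by (metis imageE)
        moreover have "card (nb m ` Os) = 3" using card_image[OF injO] cO by simp
        moreover have "finite (nb m ` Os)" unfolding Os_def by simp
        ultimately show ?thesis by simp
      qed
      moreover have "finite {e\<in>V. u \<in> ends e}" using finV by simp
      ultimately have "4 \<le> card {e\<in>V. u \<in> ends e}" by (metis card_mono)
      then show False using deg3[of u] by simp
    qed
    obtain a where a: "a \<in> Os" "y \<notin> ends (nb m a)" using many by blast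
    obtain b where b: "b \<in> Os" "z \<notin> ends (nb m b)" using many by blast
    have za: "z \<in> ends (nb m a)" using nbO[OF a(1)] a(2) eyz by auto
    have yb: "y \<in> ends (nb m b)" using nbO[OF b(1)] b(2) eyz by auto
    have ab: "a \<noteq> b" using a(2) yb by auto
    have aa: "a < 4" "a \<noteq> m" "b < 4" "b \<noteq> m" using a b unfolding Os_def by auto
    obtain wa where wa: "wa \<in> ends (phi a)" using ends_ne phi_V aa by blast
    obtain wb where wb: "wb \<in> ends (phi b)" using ends_ne phi_V aa by blast
    have r1: "reach ends (V - {phi m}) y wb" using tail_reach[OF m aa(3,4) yb wb] .
    have r2: "reach ends (V - {phi m}) wb wa" using other_reach[OF m aa(3,1,4,2) ab[symmetric] wb wa] .
    have r3: "reach ends (V - {phi m}) z wa" using tail_reach[OF m aa(1,2) za wa] .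
    show ?thesis using r1 r2 r3 reach_trans reach_sym by metis
  qed
qed

end

context imm begin

definition noP :: bool where
  "noP \<longleftrightarrow> (\<forall>C1 C2. is_cycle VH V ends C1 \<and> is_cycle VH V ends C2 \<and> C1 \<noteq> C2 \<and> C1 \<inter> C2 \<noteq> {}
             \<longrightarrow> card C1 = 2 \<and> card C2 = 2)"

lemma edges_at_cycle_vertex:
  assumes c: "cyc_list vs es" and w: "w \<in> set vs" and x: "x \<in> V" "x \<notin> set es" "w \<in> ends x"
    and y: "y \<in> V" "y \<noteq> x" "w \<in> ends y"
  shows "y \<in> set es"
proof -
  obtain e1 e2 where e: "e1 \<in> set es" "e2 \<in> set es" "e1 \<noteq> e2" "w \<in> ends e1" "w \<in> ends e2"
    using cyc_two_edges[OF c w] by blast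
  have esV: "set es \<subseteq> V" using cyc_V[OF c] .
  have sub: "{e1, e2, x} \<subseteq> {e\<in>V. w \<in> ends e}" using e x esV by auto
  have "e1 \<noteq> x" "e2 \<noteq> x" using e x by auto
  then have c3: "card {e1, e2, x} = 3" using e(3) by (simp add: card_insert_if)
  have fin: "finite {e\<in>V. w \<in> ends e}" using finV by simp
  have "card {e\<in>V. w \<in> ends e} \<le> 3" by (rule deg3)
  then have "{e1, e2, x} = {e\<in>V. w \<in> ends e}" using card_subset_eq[OF fin sub] c3 card_mono[OF fin sub] by simp
  moreover have "y \<in> {e\<in>V. w \<in> ends e}" using y by simp
  ultimately show ?thesis using e y by auto
qed

lemma LQ:
  assumes nP: noP and c: "cyc_list vs es"
    and par: "card (set es) = 2 \<longrightarrow> (\<forall>x\<in>V - set es. \<forall>d\<in>set es. ends x \<noteq> ends d)"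
    and x: "x \<in> V" "x \<notin> set es" and w: "w \<in> ends x" "w \<in> set vs" "w' \<in> ends x" "w' \<noteq> w"
  shows "\<not> reach ends (V - {x}) w w'"
proof
  assume r: "reach ends (V - {x}) w w'"
  have ex: "ends x = {w, w'}" using ends_two[OF x(1)] w by auto
  obtain vs' es' where c': "cyc_list vs' es'" "x \<in> set es'" "set es' \<subseteq> insert x (V - {x})"
    and yp: "\<exists>y\<in>set es'. y \<noteq> x \<and> w \<in> ends y"
    and l2: "length es' = 2 \<longrightarrow> (\<exists>y\<in>V - {x}. ends y = {w,w'} \<and> set es' = {x,y})"
    using mkcycle[OF x(1) ex w(4)[symmetric] _ _ r] by blast
  obtain y where y: "y \<in> set es'" "y \<noteq> x" "w \<in> ends y" using yp by blast
  have yV: "y \<in> V" using y c' by blast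
  have yD: "y \<in> set es" using edges_at_cycle_vertex[OF c w(2) x w(1) yV y(2,3)] .
  have cy: "is_cycle VH V ends (set es)" "is_cycle VH V ends (set es')"
    using c c'(1) is_cycle_iff by blast+
  have "set es \<noteq> set es'" using x(2) c'(2) by blast
  moreover have "set es \<inter> set es' \<noteq> {}" using yD y by blast
  ultimately have cc: "card (set es) = 2" "card (set es') = 2" using nP cy unfolding noP_def by blast+
  then have "length es' = 2" using cyc_card[OF c'(1)] by simp
  then obtain y' where y': "y' \<in> V - {x}" "ends y' = {w,w'}" "set es' = {x,y'}" using l2 by blast
  have "y = y'" using y y' by auto
  then have "ends x = ends y" using ex y' by simp
  then show False using par cc x yD by blast
qed

lemma spoke_unique:
  assumes nP: noP and c: "cyc_list vs es"
    and par: "card (set es) = 2 \<longrightarrow> (\<forall>x\<in>V - set es. \<forall>d\<in>set es. ends x \<noteq> ends d)"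
    and tm: "tm \<in> V" "ends tm \<inter> set vs = {}" "z \<in> ends tm" "z' \<in> ends tm"
    and s: "s \<in> V" "ends s = {w,w'}" "w \<in> set vs" "w' \<notin> set vs"
      "reach ends {e\<in>V. ends e \<inter> set vs = {}} w' z"
    and s': "s' \<in> V" "ends s' = {v,v'}" "v \<in> set vs" "v' \<notin> set vs"
      "reach ends {e\<in>V. ends e \<inter> set vs = {}} v' z'"
  shows "s = s'"
proof (rule ccontr)
  assume ne: "s \<noteq> s'"
  let ?N = "{e\<in>V. ends e \<inter> set vs = {}}"
  have sN: "s \<notin> ?N" using s by auto
  have NV: "?N \<subseteq> V - {s}" using sN by auto
  have r1: "reach ends (V - {s}) w' z" using s(5) NV reach_mono by blast
  have "tm \<noteq> s" using tm s by auto
  then have r2: "reach ends (V - {s}) z z'" using reach_edgeV[where e=tm and F="V - {s}" and a=z and b=z'] tm by auto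
  have r3: "reach ends (V - {s}) z' v'" using s'(5) NV reach_mono reach_sym by blast
  have r4: "reach ends (V - {s}) v' v" using reach_edge2[where e=s' and F="V - {s}" and a=v' and b=v] s' ne by (auto simp: insert_commute)
  have sD: "s \<notin> set es" using cyc_ends_in[OF c] s by blast
  have DV: "set es \<subseteq> V - {s}" using cyc_V[OF c] sD by blast
  have r5: "reach ends (V - {s}) v w" using cyc_conn[OF c s'(3) s(3)] DV reach_mono by blast
  have "reach ends (V - {s}) w' w" using r1 r2 r3 r4 r5 reach_trans by metis
  moreover have "\<not> reach ends (V - {s}) w w'"
    apply (rule LQ[OF nP c par s(1) sD])
    using s by auto
  ultimately show False using reach_sym by blast
qed

lemma Q_reach: "i < 4 \<Longrightarrow> j < 4 \<Longrightarrow> i \<noteq> j \<Longrightarrow> y \<in> ends (phi i) \<Longrightarrow> z \<in> ends (phi j) \<Longrightarrow>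
   reach ends (set (Q i j)) y z \<and> set (Q i j) \<subseteq> V"
  using path_reach[OF Q_path phi_V] path_set_V[OF Q_path phi_V] by blast

lemma others2: assumes "0 < m" "m < (4::nat)"
  obtains k l where "k < 4" "l < 4" "k \<noteq> 0" "l \<noteq> 0" "k \<noteq> m" "l \<noteq> m" "k \<noteq> l"
proof -
  have "m = 1 \<or> m = 2 \<or> m = 3" using assms by auto
  then show ?thesis
  proof (elim disjE)
    assume "m = 1" then show ?thesis using that[of 2 3] by simp
  next
    assume "m = 2" then show ?thesis using that[of 1 3] by simp
  next
    assume "m = 3" then show ?thesis using that[of 1 2] by simp
  qed
qed

lemma terminal_in_D:
  assumes nP: noP and c: "cyc_list vs es"
    and par: "card (set es) = 2 \<longrightarrow> (\<forall>x\<in>V - set es. \<forall>d\<in>set es. ends x \<noteq> ends d)"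
    and t0: "phi 0 \<in> set es" and m: "0 < m" "m < 4"
  shows "phi m \<in> set es"
proof (rule ccontr)
  assume out: "phi m \<notin> set es"
  let ?A = "set vs"
  let ?N = "{e\<in>V. ends e \<inter> set vs = {}}"
  have pmV: "phi m \<in> V" using phi_V m by simp
  have endsA: "ends (phi m) \<inter> set vs = {}"
  proof (rule ccontr)
    assume "ends (phi m) \<inter> set vs \<noteq> {}"
    then obtain w where w: "w \<in> ends (phi m)" "w \<in> set vs" by blast
    obtain w' where w': "w' \<in> ends (phi m)" "w' \<noteq> w" using ends_two[OF pmV] w by blast
    have "reach ends (V - {phi m}) w w'" using step1[OF m(2) w(1) w'(1)] .
    moreover have "\<not> reach ends (V - {phi m}) w w'" by (rule LQ[OF nP c par pmV out w(1,2) w'])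
    ultimately show False by blast
  qed
  obtain k l where kl: "k < 4" "l < 4" "k \<noteq> 0" "l \<noteq> 0" "k \<noteq> m" "l \<noteq> m" "k \<noteq> l"
    using others2[OF m] by blast
  obtain y where y: "y \<in> ends (phi 0)" using ends_ne phi_V by fastforce
  have yA: "y \<in> set vs" using cyc_ends_in[OF c t0] y by blast
  obtain z where z: "z \<in> ends (phi m)" using ends_ne pmV by blast
  have zA: "z \<notin> set vs" using endsA z by blast
  have spk: "\<And>W. W \<subseteq> V \<Longrightarrow> reach ends W y z \<Longrightarrow> \<exists>s\<in>W. s \<in> V \<and> (\<exists>w w'. ends s = {w,w'} \<and> w \<in> ?A \<and> w' \<notin> ?A \<and> reach ends ?N w' z)"
  proof -
    fix W assume W: "W \<subseteq> V" "reach ends W y z"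
    obtain s w w' where s: "s \<in> W" "ends s = {w,w'}" "w \<in> ?A" "w' \<notin> ?A"
      "reach ends {e\<in>W. ends e \<inter> ?A = {}} w' z"
      using reach_exit[OF W(2) yA zA] by blast
    have "{e\<in>W. ends e \<inter> ?A = {}} \<subseteq> ?N" using W(1) by auto
    then have "reach ends ?N w' z" using s(5) reach_mono by blast
    then show "\<exists>s\<in>W. s \<in> V \<and> (\<exists>w w'. ends s = {w,w'} \<and> w \<in> ?A \<and> w' \<notin> ?A \<and> reach ends ?N w' z)"
      using s W(1) by blast
  qed
  have two: "\<And>j. j < 4 \<Longrightarrow> j \<noteq> 0 \<Longrightarrow> j \<noteq> m \<Longrightarrow> set (Q 0 j) \<union> set (Q j m) \<subseteq> V \<and> reach ends (set (Q 0 j) \<union> set (Q j m)) y z"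
  proof -
    fix j assume j: "j < 4" "j \<noteq> 0" "j \<noteq> m"
    obtain u where u: "u \<in> ends (phi j)" using ends_ne phi_V j by blast
    have a1: "reach ends (set (Q 0 j)) y u \<and> set (Q 0 j) \<subseteq> V" using Q_reach[of 0 j y u] j y u by simp
    have a2: "reach ends (set (Q j m)) u z \<and> set (Q j m) \<subseteq> V" using Q_reach[of j m u z] j m u z by simp
    have "reach ends (set (Q 0 j) \<union> set (Q j m)) y u" using a1 reach_mono by blast
    moreover have "reach ends (set (Q 0 j) \<union> set (Q j m)) u z" using a2 reach_mono by blast
    ultimately show "set (Q 0 j) \<union> set (Q j m) \<subseteq> V \<and> reach ends (set (Q 0 j) \<union> set (Q j m)) y z"
      using a1 a2 reach_trans by blast
  qed
  have w1: "set (Q 0 m) \<subseteq> V \<and> reach ends (set (Q 0 m)) y z" using Q_reach[of 0 m y z] m y z by simp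
  obtain s1 w1 w1' where s1: "s1 \<in> set (Q 0 m)" "s1 \<in> V" "ends s1 = {w1,w1'}" "w1 \<in> ?A" "w1' \<notin> ?A" "reach ends ?N w1' z"
    using spk[of "set (Q 0 m)"] w1 by blast
  obtain s2 w2 w2' where s2: "s2 \<in> set (Q 0 k) \<union> set (Q k m)" "s2 \<in> V" "ends s2 = {w2,w2'}" "w2 \<in> ?A" "w2' \<notin> ?A" "reach ends ?N w2' z"
    using spk[of "set (Q 0 k) \<union> set (Q k m)"] two[of k] kl by blast
  obtain s3 w3 w3' where s3: "s3 \<in> set (Q 0 l) \<union> set (Q l m)" "s3 \<in> V" "ends s3 = {w3,w3'}" "w3 \<in> ?A" "w3' \<notin> ?A" "reach ends ?N w3' z"
    using spk[of "set (Q 0 l) \<union> set (Q l m)"] two[of l] kl by blast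
  have e12: "s1 = s2" by (rule spoke_unique[OF nP c par pmV endsA z z s1(2-6) s2(2-6)])
  have e13: "s1 = s3" by (rule spoke_unique[OF nP c par pmV endsA z z s1(2-6) s3(2-6)])
  have s1D: "s1 \<notin> set es" using cyc_ends_in[OF c] s1 by blast
  have nt: "\<forall>i<4. s1 \<noteq> phi i"
  proof (intro allI impI notI)
    fix i assume i: "i < 4" "s1 = phi i"
    have "w1 \<noteq> w1'" using s1 by auto
    have "reach ends (V - {s1}) w1 w1'" using step1[of i w1 w1'] i s1(3) by simp
    moreover have "\<not> reach ends (V - {s1}) w1 w1'"
      by (rule LQ[OF nP c par s1(2) s1D]) (use s1 \<open>w1 \<noteq> w1'\<close> in auto)
    ultimately show False by blast
  qed
  define pk where "pk = (if s1 \<in> set (Q 0 k) then (0,k) else (min k m, max k m))"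
  define pl where "pl = (if s1 \<in> set (Q 0 l) then (0,l) else (min l m, max l m))"
  have pk: "pk \<in> Pairs" "s1 \<in> set (P (fst pk) (snd pk))" "fst pk = k \<or> snd pk = k" "fst pk \<noteq> l \<and> snd pk \<noteq> l"
    unfolding pk_def Pairs_def using kl m s2 e12 Q_set by (auto simp: min_def max_def)
  have pl: "pl \<in> Pairs" "s1 \<in> set (P (fst pl) (snd pl))" "fst pl \<noteq> k \<and> snd pl \<noteq> k"
    unfolding pl_def Pairs_def using kl m s3 e13 Q_set by (auto simp: min_def max_def)
  have pm: "(0,m) \<in> Pairs" "s1 \<in> set (P 0 m)" using m s1 Q_set unfolding Pairs_def by auto
  have "card {(0,m), pk, pl} = 3"
  proof -
    have "(0,m) \<noteq> pk" using pk(3) kl by auto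
    moreover have "(0,m) \<noteq> pl" using pl(1) kl pl_def by (auto simp: min_def max_def split: if_splits)
    moreover have "pk \<noteq> pl" using pk(3) pl(3) by auto
    ultimately show ?thesis by (simp add: card_insert_if)
  qed
  moreover have "card {(0,m), pk, pl} \<le> 2"
    apply (rule nonterm_le2[OF s1(2) nt])
    using pk pl pm by auto
  ultimately show False by simp
qed

end

lemma order3:
  fixes f :: "nat \<Rightarrow> nat"
  assumes "f 1 \<noteq> f 2" "f 1 \<noteq> f 3" "f 2 \<noteq> f 3"
  obtains z y w where "{z,y,w} = {1,2,3::nat}" "f z < f y" "f y < f w"
proof -
  consider "f 1 < f 2" "f 2 < f 3" | "f 1 < f 3" "f 3 < f 2" | "f 2 < f 1" "f 1 < f 3"
    | "f 2 < f 3" "f 3 < f 1" | "f 3 < f 1" "f 1 < f 2" | "f 3 < f 2" "f 2 < f 1"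
    using assms by linarith
  then show ?thesis
  proof cases
    case 1 then show ?thesis using that[of 1 2 3] by auto
  next
    case 2 then show ?thesis using that[of 1 3 2] by auto
  next
    case 3 then show ?thesis using that[of 2 1 3] by auto
  next
    case 4 then show ?thesis using that[of 2 3 1] by auto
  next
    case 5 then show ?thesis using that[of 3 1 2] by auto
  next
    case 6 then show ?thesis using that[of 3 2 1] by auto
  qed
qed

context imm begin

lemma ring:
  assumes nP: noP and c: "cyc_list vs es" and k3: "length es \<ge> 3"
    and idx: "x < 4" "z < 4" "y < 4" "w < 4" "x \<noteq> z" "x \<noteq> y" "x \<noteq> w" "z \<noteq> y" "z \<noteq> w" "y \<noteq> w"
    and pos: "px < pz" "pz < py" "py < length es" "pw < length es" "pw < px \<or> py < pw"
    and at: "es!px = phi x" "es!pz = phi z" "es!py = phi y" "es!pw = phi w"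
  shows False
proof -
  define K where "K = length es"
  have lv: "length vs = K" using cyc_len[OF c] K_def by simp
  have des: "distinct es" "distinct vs" using cyc_dist[OF c] by auto
  define F where "F = V - {phi z, phi w}"
  have esV: "set es \<subseteq> V" using cyc_V[OF c] .
  have ex: "ends (phi x) = {vs!px, vs!Suc px}" using cyc_ends[OF c, of px] at pos lv K_def by simp
  have ez: "ends (phi z) = {vs!pz, vs!Suc pz}" using cyc_ends[OF c, of pz] at pos lv K_def by simp
  have ey: "ends (phi y) = {vs!py, vs!(Suc py mod K)}" using cyc_ends[OF c, of py] at pos lv K_def by simp
  have r0: "reach ends (set (Q x y)) (vs!Suc px) (vs!py) \<and> set (Q x y) \<subseteq> V"
    using Q_reach[of x y "vs!Suc px" "vs!py"] idx ex ey by simp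
  have "phi z \<notin> set (Q x y)" "phi w \<notin> set (Q x y)" unfolding Q_set
    using term_not_in[of z "min x y" "max x y"] term_not_in[of w "min x y" "max x y"] idx
    by (auto simp: min_def max_def)
  then have "set (Q x y) \<subseteq> F" using r0 unfolding F_def by blast
  then have r0F: "reach ends F (vs!Suc px) (vs!py)" using r0 reach_mono by blast
  have arcF: "\<And>i j. i \<le> j \<Longrightarrow> j < K \<Longrightarrow> pz \<notin> {i..<j} \<Longrightarrow> pw \<notin> {i..<j} \<Longrightarrow> reach ends F (vs!i) (vs!j)"
  proof -
    fix i j assume ij: "i \<le> j" "j < K" "pz \<notin> {i..<j}" "pw \<notin> {i..<j}"
    have r: "reach ends ((!) es ` {i..<j}) (vs!i) (vs!j)" using cyc_arc[OF c ij(1)] ij lv by simp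
    have "(!) es ` {i..<j} \<subseteq> F"
    proof
      fix e assume "e \<in> (!) es ` {i..<j}"
      then obtain t where t: "t \<in> {i..<j}" "e = es!t" by blast
      have tK: "t < K" using t ij by simp
      have "e \<in> V" using t tK esV K_def by auto
      moreover have "t \<noteq> pz" "t \<noteq> pw" using t ij by auto
      moreover have "pz < K" "pw < K" using pos K_def by auto
      ultimately have "e \<in> V" "es!t \<noteq> es!pz" "es!t \<noteq> es!pw"
        using nth_eq_iff_index_eq[OF des(1), of t pz] nth_eq_iff_index_eq[OF des(1), of t pw] tK K_def
        by auto
      then have "e \<in> V" "e \<noteq> phi z" "e \<noteq> phi w" using t at by auto
      then show "e \<in> F" unfolding F_def by simp
    qed
    then show "reach ends F (vs!i) (vs!j)" using r reach_mono by blast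
  qed
  have a1: "reach ends F (vs!Suc px) (vs!pz)" using arcF[of "Suc px" pz] pos K_def by auto
  have a2: "reach ends F (vs!Suc pz) (vs!py)" using arcF[of "Suc pz" py] pos K_def by auto
  have rz: "reach ends F (vs!pz) (vs!Suc pz)" using a1 a2 r0F reach_sym reach_trans by metis
  have pzV: "phi z \<in> V" using phi_V idx by simp
  have neq: "vs!pz \<noteq> vs!Suc pz" using des(2) pos lv K_def by (simp add: nth_eq_iff_index_eq)
  have FV: "F \<subseteq> V" "phi z \<notin> F" unfolding F_def by auto
  obtain vs' es' where c': "cyc_list vs' es'" "phi z \<in> set es'" "set es' \<subseteq> insert (phi z) F"
    using mkcycle[OF pzV ez neq FV rz] by blast
  have "phi w \<noteq> phi z" using phi_inj idx by metis
  then have "phi w \<notin> set es'" using c'(3) F_def by auto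
  moreover have "phi w \<in> set es" using at(4) pos by (metis nth_mem)
  ultimately have "set es \<noteq> set es'" by blast
  moreover have "phi z \<in> set es" using at(2) pos by (metis nth_mem order.strict_trans)
  moreover have "is_cycle VH V ends (set es)" "is_cycle VH V ends (set es')" using c c'(1) is_cycle_iff by blast+
  ultimately have "card (set es) = 2" using nP c'(2) unfolding noP_def by blast
  then show False using cyc_card[OF c] k3 by simp
qed

lemma three_at:
  assumes "a \<in> V" "b \<in> V" "c \<in> V" "a \<noteq> b" "a \<noteq> c" "b \<noteq> c" "w \<in> ends a" "w \<in> ends b" "w \<in> ends c"
    "y \<in> V" "w \<in> ends y"
  shows "y \<in> {a,b,c}"
proof -
  have sub: "{a, b, c} \<subseteq> {e\<in>V. w \<in> ends e}" using assms by auto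
  have c3: "card {a, b, c} = 3" using assms by (simp add: card_insert_if)
  have fin: "finite {e\<in>V. w \<in> ends e}" using finV by simp
  have "card {e\<in>V. w \<in> ends e} \<le> 3" by (rule deg3)
  then have "{a, b, c} = {e\<in>V. w \<in> ends e}" using card_subset_eq[OF fin sub] c3 card_mono[OF fin sub] by simp
  then show ?thesis using assms by auto
qed

lemma no_imm: assumes nP: noP shows False
proof -
  have p0V: "phi 0 \<in> V" using phi_V by simp
  obtain u v where uv: "u \<noteq> v" "ends (phi 0) = {u,v}" using ends_two[OF p0V] by blast
  have r: "reach ends (V - {phi 0}) u v" using step1[of 0 u v] uv by simp
  obtain vs es where c: "cyc_list vs es" and t0: "phi 0 \<in> set es"
    and l2: "length es = 2 \<longrightarrow> (\<exists>g\<in>V - {phi 0}. ends g = {u,v} \<and> set es = {phi 0, g})"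
    using mkcycle[OF p0V uv(2) uv(1) _ _ r] by auto
  have par: "card (set es) = 2 \<longrightarrow> (\<forall>x\<in>V - set es. \<forall>d\<in>set es. ends x \<noteq> ends d)"
  proof (intro impI ballI notI)
    fix x d assume c2: "card (set es) = 2" and x: "x \<in> V - set es" and d: "d \<in> set es" and exd: "ends x = ends d"
    have "length es = 2" using c2 cyc_card[OF c] by simp
    then obtain g where g: "g \<in> V - {phi 0}" "ends g = {u,v}" "set es = {phi 0, g}" using l2 by blast
    have "ends d = {u,v}" using d g uv by auto
    then have exu: "ends x = {u,v}" using exd by simp
    have dif: "x \<noteq> phi 0" "x \<noteq> g" "phi 0 \<noteq> g" using x g by auto
    have xV: "x \<in> V" "g \<in> V" using x g by auto
    have inn: "\<And>a. a \<in> {1,2,3} \<Longrightarrow> nb 0 a \<in> {g, x}"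
    proof -
      fix a :: nat assume a: "a \<in> {1,2,3}"
      have np: "nb 0 a \<in> V \<and> nb 0 a \<noteq> phi 0 \<and> ends (nb 0 a) \<inter> ends (phi 0) \<noteq> {}"
        using nb_props[of 0 a] a by auto
      then obtain w where w: "w \<in> {u,v}" "w \<in> ends (nb 0 a)" using uv by auto
      have "nb 0 a \<in> {phi 0, g, x}"
        apply (rule three_at[OF p0V xV(2) xV(1) dif(3) dif(1)[symmetric] dif(2)[symmetric]])
        using w uv g exu np by auto
      then show "nb 0 a \<in> {g, x}" using np by auto
    qed
    have "inj_on (nb 0) {1,2,3}" unfolding inj_on_def
    proof (intro ballI impI)
      fix a b :: nat assume ab: "a \<in> {1,2,3}" "b \<in> {1,2,3}" "nb 0 a = nb 0 b"
      then have "a < 4" "a \<noteq> 0" "b < 4" "b \<noteq> 0" by auto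
      then show "a = b" using nb_inj[of 0 a b] ab(3) by simp
    qed
    then have "card (nb 0 ` {1,2,3}) = 3" by (simp add: card_image)
    moreover have "nb 0 ` {1,2,3} \<subseteq> {g, x}" using inn by blast
    ultimately have "3 \<le> card {g, x}" by (metis card_mono finite.emptyI finite.insertI)
    moreover have "card {g, x} \<le> 2" by (simp add: card_insert_if)
    ultimately show False by simp
  qed
  have allin: "\<And>m. m < 4 \<Longrightarrow> phi m \<in> set es"
  proof -
    fix m :: nat assume m: "m < 4"
    show "phi m \<in> set es"
    proof (cases "m = 0")
      case True then show ?thesis using t0 by simp
    next
      case False then show ?thesis using terminal_in_D[OF nP c par t0] m by simp
    qed
  qed
  have len: "length es \<ge> 4"
  proof -
    have "phi ` {..<4} \<subseteq> set es" using allin by auto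
    moreover have "card (phi ` {..<4}) = 4" using card_image[OF inj] by simp
    ultimately have "4 \<le> card (set es)" by (metis card_mono finite_set)
    then show ?thesis using cyc_card[OF c] by simp
  qed
  obtain p0 where p0: "p0 < length es" "es!p0 = phi 0" using t0 by (auto simp: in_set_conv_nth)
  define vs' where "vs' = rotate p0 vs"
  define es' where "es' = rotate p0 es"
  have c': "cyc_list vs' es'" unfolding vs'_def es'_def by (rule cyc_rotate[OF c])
  have les': "length es' = length es" unfolding es'_def by simp
  have ses': "set es' = set es" unfolding es'_def by simp
  have "0 < length es" using p0(1) by linarith
  then have e0: "es'!0 = phi 0" unfolding es'_def using nth_rotate[of 0 es p0] p0 by simp
  have des': "distinct es'" using cyc_dist[OF c'] by simp
  define pos where "pos j = (SOME i. i < length es' \<and> es'!i = phi j)" for j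
  have posp: "\<And>j. j < 4 \<Longrightarrow> pos j < length es' \<and> es'!(pos j) = phi j"
  proof -
    fix j :: nat assume "j < 4"
    then have "\<exists>i. i < length es' \<and> es'!i = phi j" using allin ses' by (metis in_set_conv_nth)
    then show "pos j < length es' \<and> es'!(pos j) = phi j" unfolding pos_def by (rule someI_ex)
  qed
  have posinj: "\<And>i j. i < 4 \<Longrightarrow> j < 4 \<Longrightarrow> i \<noteq> j \<Longrightarrow> pos i \<noteq> pos j"
  proof
    fix i j :: nat assume ij: "i < 4" "j < 4" "i \<noteq> j" "pos i = pos j"
    then have "phi i = phi j" using posp[of i] posp[of j] by metis
    then show False using phi_inj ij by blast
  qed
  have pos0: "\<And>j. 0 < j \<Longrightarrow> j < 4 \<Longrightarrow> 0 < pos j"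
  proof -
    fix j :: nat assume j: "0 < j" "j < 4"
    have "phi j \<noteq> phi 0" using phi_inj[of j 0] j by auto
    then have "pos j \<noteq> 0" using posp[of j] j e0 by metis
    then show "0 < pos j" by simp
  qed
  obtain z y w where zyw: "{z,y,w} = {1,2,3::nat}" "pos z < pos y" "pos y < pos w"
  proof -
    have "pos 1 \<noteq> pos 2" "pos 1 \<noteq> pos 3" "pos 2 \<noteq> pos 3" using posinj by auto
    then show ?thesis using order3[of pos] that by blast
  qed
  have "z \<in> {1,2,3::nat}" "y \<in> {1,2,3::nat}" "w \<in> {1,2,3::nat}" using zyw(1) by blast+
  then have zyw2: "z < 4" "y < 4" "w < 4" "z \<noteq> 0" "y \<noteq> 0" "w \<noteq> 0" by auto
  have d3: "z \<noteq> y" "z \<noteq> w" "y \<noteq> w" using zyw by auto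
  show False
    apply (rule ring[OF nP c', of 0 z y w 0 "pos z" "pos y" "pos w"])
    using les' len zyw zyw2 d3 posp pos0 e0 by auto
qed

end

lemma connected_path:
  assumes "connected_in E B" "x \<in> B" "y \<in> B"
  shows "\<exists>p. is_path E p x y \<and> set p \<subseteq> B"
proof -
  let ?R = "\<lambda>u v. u \<in> B \<and> v \<in> B \<and> {u, v} \<in> E"
  have "?R\<^sup>*\<^sup>* x y" using assms unfolding connected_in_def by blast
  then obtain xs0 where "rtrancl_path ?R x xs0 y" unfolding rtranclp_eq_rtrancl_path by blast
  then obtain xs where xs: "rtrancl_path ?R x xs y" "distinct (x # xs)" "set xs \<subseteq> set xs0"
    by (rule rtrancl_path_distinct)
  define p where "p = x # xs"
  have st: "\<And>i. i < length xs \<Longrightarrow> ?R (p ! i) (p ! Suc i)"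
    using rtrancl_path_nth[OF xs(1)] unfolding p_def by simp
  have lastp: "last p = y"
  proof (cases "xs = []")
    case True
    then show ?thesis using xs(1) unfolding p_def by (auto elim: rtrancl_path.cases)
  next
    case False
    then show ?thesis using rtrancl_path_last[OF xs(1)] unfolding p_def by simp
  qed
  have "is_path E p x y" unfolding is_path_def using st lastp xs(2) unfolding p_def by auto
  moreover have "set p \<subseteq> B"
  proof
    fix u assume "u \<in> set p"
    then obtain i where i: "i < length p" "p!i = u" by (auto simp: in_set_conv_nth)
    show "u \<in> B"
    proof (cases i)
      case 0 then show ?thesis using i assms(2) unfolding p_def by auto
    next
      case (Suc j) then show ?thesis using st[of j] i unfolding p_def by auto
    qed
  qed
  ultimately show ?thesis by blast
qed

lemma is_path_take:
  assumes "is_path E p a b" "0 < n" "n \<le> length p"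
  shows "is_path E (take n p) a (p!(n-1))"
  using assms unfolding is_path_def
  by (auto simp: last_conv_nth hd_conv_nth min_def)

lemma is_path_drop:
  assumes "is_path E p a b" "n < length p"
  shows "is_path E (drop n p) (p!n) b"
  using assms unfolding is_path_def
  by (auto simp: hd_drop_conv_nth)

lemma pe_elem:
  assumes "distinct p" "f \<in> path_edges p"
  shows "\<exists>u v. f = {u,v} \<and> u \<noteq> v \<and> u \<in> set p \<and> v \<in> set p"
proof -
  obtain i where i: "Suc i < length p" "f = {p!i, p!Suc i}" using assms(2) unfolding path_edges_def by blast
  have "p!i \<noteq> p!Suc i" using assms(1) i(1) by (simp add: nth_eq_iff_index_eq)
  then show ?thesis using i by (metis Suc_lessD nth_mem)
qed

lemma pe_disj:
  assumes "distinct p" "distinct q" "set p \<inter> set q \<subseteq> {c}"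
  shows "path_edges p \<inter> path_edges q = {}"
proof (rule ccontr)
  assume "path_edges p \<inter> path_edges q \<noteq> {}"
  then obtain f where f: "f \<in> path_edges p" "f \<in> path_edges q" by blast
  obtain u v where uv: "f = {u,v}" "u \<noteq> v" "u \<in> set p" "v \<in> set p" using pe_elem[OF assms(1) f(1)] by blast
  have "u \<in> set q" "v \<in> set q"
  proof -
    obtain u' v' where "f = {u',v'}" "u' \<in> set q" "v' \<in> set q" using pe_elem[OF assms(2) f(2)] by blast
    then show "u \<in> set q" "v \<in> set q" using uv by (auto simp: doubleton_eq_iff)
  qed
  then show False using uv assms(3) by blast
qed

lemma median:
  assumes B: "connected_in E B" and xyz: "x \<in> B" "y \<in> B" "z \<in> B"
  shows "\<exists>c p1 p2 p3. c \<in> B \<and> is_path E p1 c x \<and> is_path E p2 c y \<and> is_path E p3 c z \<and>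
     set p1 \<subseteq> B \<and> set p2 \<subseteq> B \<and> set p3 \<subseteq> B \<and>
     path_edges p1 \<inter> path_edges p2 = {} \<and> path_edges p1 \<inter> path_edges p3 = {} \<and>
     path_edges p2 \<inter> path_edges p3 = {}"
proof -
  obtain p where p: "is_path E p x y" "set p \<subseteq> B" using connected_path[OF B xyz(1,2)] by blast
  obtain q where q: "is_path E q z x" "set q \<subseteq> B" using connected_path[OF B xyz(3,1)] by blast
  have dp: "distinct p" "p \<noteq> []" "hd p = x" "last p = y" using p unfolding is_path_def by auto
  have dq: "distinct q" "q \<noteq> []" "hd q = z" "last q = x" using q unfolding is_path_def by auto
  have ex: "\<exists>r. r < length q \<and> q!r \<in> set p"
    using dq dp by (metis diff_less last_conv_nth length_greater_0_conv hd_in_set zero_less_one)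
  define r where "r = (LEAST r. r < length q \<and> q!r \<in> set p)"
  have r: "r < length q" "q!r \<in> set p" using LeastI_ex[OF ex] unfolding r_def by auto
  have rmin: "\<And>i. i < r \<Longrightarrow> q!i \<notin> set p"
    using not_less_Least r unfolding r_def by (metis order.strict_trans)
  define c where "c = q!r"
  obtain p1 p2 where sp: "p = p1 @ c # p2" using r(2) c_def by (metis split_list)
  define q' where "q' = take (Suc r) q"
  have pq': "is_path E q' z c" using is_path_take[OF q(1), of "Suc r"] r unfolding q'_def c_def by simp
  have n1: "length p1 < length p" using sp by simp
  have pa: "is_path E (p1 @ [c]) x c"
  proof -
    have "take (Suc (length p1)) p = p1 @ [c]" using sp by simp
    moreover have "p ! (Suc (length p1) - 1) = c" using sp by simp
    ultimately show ?thesis using is_path_take[OF p(1), of "Suc (length p1)"] n1 by simp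
  qed
  have pb: "is_path E (c # p2) c y"
  proof -
    have "drop (length p1) p = c # p2" using sp by simp
    moreover have "p ! length p1 = c" using sp by simp
    ultimately show ?thesis using is_path_drop[OF p(1) n1] by simp
  qed
  have d1: "distinct (p1 @ [c])" "distinct (c # p2)" "distinct q'" using pa pb pq' unfolding is_path_def by auto
  have s12: "set (p1 @ [c]) \<inter> set (c # p2) \<subseteq> {c}" using dp(1) sp by auto
  have sq: "set q' \<inter> set p \<subseteq> {c}"
  proof
    fix u assume u: "u \<in> set q' \<inter> set p"
    then obtain i where i: "i < length q'" "q'!i = u" by (auto simp: in_set_conv_nth)
    have "i \<le> r" using i unfolding q'_def by simp
    moreover have "q!i = u" using i unfolding q'_def by simp
    ultimately have "i = r" using rmin u by (metis le_neq_implies_less IntD2)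
    then show "u \<in> {c}" using \<open>q!i = u\<close> c_def by simp
  qed
  have e1: "path_edges (rev (p1 @ [c])) \<inter> path_edges (c # p2) = {}"
    unfolding path_edges_rev using pe_disj[OF d1(1,2) s12] .
  have e2: "path_edges (rev (p1 @ [c])) \<inter> path_edges (rev q') = {}"
    unfolding path_edges_rev using pe_disj[OF d1(1,3), of c] sq sp by auto
  have e3: "path_edges (c # p2) \<inter> path_edges (rev q') = {}"
    unfolding path_edges_rev using pe_disj[OF d1(2,3), of c] sq sp by auto
  have "c \<in> B" using r(2) p(2) c_def by auto
  moreover have "set (rev (p1 @ [c])) \<subseteq> B" "set (c # p2) \<subseteq> B" "set (rev q') \<subseteq> B"
    using p(2) q(2) sp unfolding q'_def by (auto dest: in_set_takeD)
  ultimately show ?thesis using is_path_rev[OF pa] pb is_path_rev[OF pq'] e1 e2 e3 by blast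
qed

lemma is_path_append:
  assumes a: "is_path E a x u" and b: "is_path E b v y" and d: "set a \<inter> set b = {}" and e: "{u,v} \<in> E"
  shows "is_path E (a @ b) x y"
proof -
  have ha: "a \<noteq> []" "hd a = x" "last a = u" "distinct a" "\<And>i. Suc i < length a \<Longrightarrow> {a!i, a!Suc i} \<in> E"
    using a unfolding is_path_def by auto
  have hb: "b \<noteq> []" "hd b = v" "last b = y" "distinct b" "\<And>i. Suc i < length b \<Longrightarrow> {b!i, b!Suc i} \<in> E"
    using b unfolding is_path_def by auto
  have "\<And>i. Suc i < length (a @ b) \<Longrightarrow> {(a@b)!i, (a@b)!Suc i} \<in> E"
  proof -
    fix i assume i: "Suc i < length (a @ b)"
    consider "Suc i < length a" | "Suc i = length a" | "Suc i > length a" by linarith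
    then show "{(a@b)!i, (a@b)!Suc i} \<in> E"
    proof cases
      case 1 then show ?thesis using ha(5)[of i] by (simp add: nth_append)
    next
      case 2
      then have "i = length a - 1" by simp
      then have "(a@b)!i = u" using ha 2 by (simp add: nth_append last_conv_nth)
      moreover have "(a@b)!Suc i = v" using 2 hb by (simp add: nth_append hd_conv_nth)
      ultimately show ?thesis using e by simp
    next
      case 3
      then have "Suc (i - length a) < length b" using i by simp
      then show ?thesis using hb(5)[of "i - length a"] 3 by (simp add: nth_append Suc_diff_le)
    qed
  qed
  then show ?thesis unfolding is_path_def using ha hb d by auto
qed

lemma pe_append_sub:
  assumes "a \<noteq> []" "b \<noteq> []"
  shows "path_edges (a @ b) \<subseteq> path_edges a \<union> path_edges b \<union> {{last a, hd b}}"
proof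
  fix f assume "f \<in> path_edges (a @ b)"
  then obtain i where i: "Suc i < length (a @ b)" "f = {(a@b)!i, (a@b)!Suc i}" unfolding path_edges_def by blast
  consider "Suc i < length a" | "Suc i = length a" | "Suc i > length a" by linarith
  then show "f \<in> path_edges a \<union> path_edges b \<union> {{last a, hd b}}"
  proof cases
    case 1 then have "f \<in> path_edges a" using i unfolding path_edges_def by (auto simp: nth_append)
    then show ?thesis by blast
  next
    case 2
    then have "i = length a - 1" by simp
    then have "f = {last a, hd b}" using i assms 2 by (simp add: nth_append last_conv_nth hd_conv_nth)
    then show ?thesis by blast
  next
    case 3
    then have "Suc (i - length a) < length b" "f = {b!(i - length a), b!Suc (i - length a)}"
      using i by (auto simp: nth_append Suc_diff_le)
    then have "f \<in> path_edges b" unfolding path_edges_def by blast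
    then show ?thesis by blast
  qed
qed

lemma nat4: "(j::nat) < 4 \<Longrightarrow> j = 0 \<or> j = 1 \<or> j = 2 \<or> j = 3" by arith

lemma others3: assumes "i < (4::nat)"
  obtains a b d where "a < 4" "b < 4" "d < 4" "a \<noteq> i" "b \<noteq> i" "d \<noteq> i" "a \<noteq> b" "a \<noteq> d" "b \<noteq> d"
    "\<And>j. j < 4 \<Longrightarrow> j \<noteq> i \<Longrightarrow> j = a \<or> j = b \<or> j = d"
proof -
  have "i = 0 \<or> i = 1 \<or> i = 2 \<or> i = 3" using assms by auto
  then show ?thesis
  proof (elim disjE)
    assume "i = 0" then show ?thesis using that[of 1 2 3] nat4 by auto
  next
    assume "i = 1" then show ?thesis using that[of 0 2 3] nat4 by auto
  next
    assume "i = 2" then show ?thesis using that[of 0 1 3] nat4 by auto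
  next
    assume "i = 3" then show ?thesis using that[of 0 1 2] nat4 by auto
  qed
qed

lemma minor_imm:
  assumes "has_Kt_minor 4 V E"
  shows "has_Kt_immersion 4 V E"
proof -
  obtain B :: "nat \<Rightarrow> 'a set" where BB: "(\<forall>i<4. B i \<noteq> {} \<and> B i \<subseteq> V \<and> connected_in E (B i)) \<and>
       (\<forall>i j. i < j \<and> j < 4 \<longrightarrow> B i \<inter> B j = {} \<and> (\<exists>x\<in>B i. \<exists>y\<in>B j. {x, y} \<in> E))"
    using assms unfolding has_Kt_minor_def by blast
  have B: "\<And>i. i < 4 \<Longrightarrow> B i \<noteq> {} \<and> B i \<subseteq> V \<and> connected_in E (B i)" using BB by blast
  have Bd: "\<And>i j. i < j \<Longrightarrow> j < 4 \<Longrightarrow> B i \<inter> B j = {}" using BB by blast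
  have Ba: "\<And>i j. i < j \<Longrightarrow> j < 4 \<Longrightarrow> \<exists>x\<in>B i. \<exists>y\<in>B j. {x, y} \<in> E" using BB by blast
  have Bdis: "\<And>x a b. x \<in> B a \<Longrightarrow> x \<in> B b \<Longrightarrow> a < 4 \<Longrightarrow> b < 4 \<Longrightarrow> a = b"
  proof (rule ccontr)
    fix x a b assume h: "x \<in> B a" "x \<in> B b" "a < 4" "b < 4" "a \<noteq> b"
    then show False using Bd[of a b] Bd[of b a] by (cases "a < b") auto
  qed
  define ab where "ab i j = (SOME xy. fst xy \<in> B i \<and> snd xy \<in> B j \<and> {fst xy, snd xy} \<in> E)" for i j
  have abp: "\<And>i j. i < j \<Longrightarrow> j < 4 \<Longrightarrow> fst (ab i j) \<in> B i \<and> snd (ab i j) \<in> B j \<and> {fst (ab i j), snd (ab i j)} \<in> E"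
  proof -
    fix i j :: nat assume ij: "i < j" "j < 4"
    then obtain x y where "x \<in> B i" "y \<in> B j" "{x,y} \<in> E" using Ba by blast
    then have "\<exists>xy. fst xy \<in> B i \<and> snd xy \<in> B j \<and> {fst xy, snd xy} \<in> E" by (intro exI[of _ "(x,y)"]) simp
    then show "fst (ab i j) \<in> B i \<and> snd (ab i j) \<in> B j \<and> {fst (ab i j), snd (ab i j)} \<in> E"
      unfolding ab_def by (rule someI_ex)
  qed
  define att where "att i j = (if i < j then fst (ab i j) else snd (ab j i))" for i j
  have attp: "\<And>i j. i < 4 \<Longrightarrow> j < 4 \<Longrightarrow> i \<noteq> j \<Longrightarrow> att i j \<in> B i \<and> {att i j, att j i} \<in> E"
  proof -
    fix i j :: nat assume ij: "i < 4" "j < 4" "i \<noteq> j"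
    show "att i j \<in> B i \<and> {att i j, att j i} \<in> E"
    proof (cases "i < j")
      case True then show ?thesis using abp[of i j] ij unfolding att_def by simp
    next
      case False
      then have "j < i" using ij by simp
      then show ?thesis using abp[of j i] ij False unfolding att_def by (simp add: insert_commute)
    qed
  qed
  have cex0: "\<forall>i. i < 4 \<longrightarrow> (\<exists>cp. fst cp \<in> B i \<and>
      (\<forall>j<4. j \<noteq> i \<longrightarrow> is_path E (snd cp j) (fst cp) (att i j) \<and> set (snd cp j) \<subseteq> B i) \<and>
      (\<forall>j j'. j < 4 \<longrightarrow> j' < 4 \<longrightarrow> j \<noteq> i \<longrightarrow> j' \<noteq> i \<longrightarrow> j \<noteq> j' \<longrightarrow> path_edges (snd cp j) \<inter> path_edges (snd cp j') = {}))"
  proof (intro allI impI)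
    fix i :: nat assume i: "i < 4"
    obtain a b d where abd: "a < 4" "b < 4" "d < 4" "a \<noteq> i" "b \<noteq> i" "d \<noteq> i" "a \<noteq> b" "a \<noteq> d" "b \<noteq> d"
      "\<And>j. j < 4 \<Longrightarrow> j \<noteq> i \<Longrightarrow> j = a \<or> j = b \<or> j = d" using others3[OF i] by blast
    have Bi: "connected_in E (B i)" using B i by blast
    obtain c p1 p2 p3 where m: "c \<in> B i" "is_path E p1 c (att i a)" "is_path E p2 c (att i b)" "is_path E p3 c (att i d)"
      "set p1 \<subseteq> B i" "set p2 \<subseteq> B i" "set p3 \<subseteq> B i"
      "path_edges p1 \<inter> path_edges p2 = {}" "path_edges p1 \<inter> path_edges p3 = {}" "path_edges p2 \<inter> path_edges p3 = {}"
      using median[OF Bi, of "att i a" "att i b" "att i d"] attp i abd by blast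
    define pp where "pp j = (if j = a then p1 else if j = b then p2 else p3)" for j
    show "\<exists>cp. fst cp \<in> B i \<and>
      (\<forall>j<4. j \<noteq> i \<longrightarrow> is_path E (snd cp j) (fst cp) (att i j) \<and> set (snd cp j) \<subseteq> B i) \<and>
      (\<forall>j j'. j < 4 \<longrightarrow> j' < 4 \<longrightarrow> j \<noteq> i \<longrightarrow> j' \<noteq> i \<longrightarrow> j \<noteq> j' \<longrightarrow> path_edges (snd cp j) \<inter> path_edges (snd cp j') = {})"
    proof (intro exI[of _ "(c, pp)"] conjI allI impI)
      show "fst (c, pp) \<in> B i" using m by simp
    next
      fix j :: nat assume j: "j < 4" "j \<noteq> i"
      then have "j = a \<or> j = b \<or> j = d" using abd by blast
      then show "is_path E (snd (c, pp) j) (fst (c, pp)) (att i j)" "set (snd (c, pp) j) \<subseteq> B i"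
        unfolding pp_def using m abd by auto
    next
      fix j j' :: nat assume j: "j < 4" "j' < 4" "j \<noteq> i" "j' \<noteq> i" "j \<noteq> j'"
      then have "j = a \<or> j = b \<or> j = d" "j' = a \<or> j' = b \<or> j' = d" using abd by blast+
      then show "path_edges (snd (c, pp) j) \<inter> path_edges (snd (c, pp) j') = {}"
        unfolding pp_def using m abd j(5) by (auto simp: Int_commute)
    qed
  qed
  have cex: "\<forall>i. \<exists>cp. i < 4 \<longrightarrow> (fst cp \<in> B i \<and>
      (\<forall>j<4. j \<noteq> i \<longrightarrow> is_path E (snd cp j) (fst cp) (att i j) \<and> set (snd cp j) \<subseteq> B i) \<and>
      (\<forall>j j'. j < 4 \<longrightarrow> j' < 4 \<longrightarrow> j \<noteq> i \<longrightarrow> j' \<noteq> i \<longrightarrow> j \<noteq> j' \<longrightarrow> path_edges (snd cp j) \<inter> path_edges (snd cp j') = {}))"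
  proof
    fix i :: nat
    show "\<exists>cp. i < 4 \<longrightarrow> (fst cp \<in> B i \<and>
      (\<forall>j<4. j \<noteq> i \<longrightarrow> is_path E (snd cp j) (fst cp) (att i j) \<and> set (snd cp j) \<subseteq> B i) \<and>
      (\<forall>j j'. j < 4 \<longrightarrow> j' < 4 \<longrightarrow> j \<noteq> i \<longrightarrow> j' \<noteq> i \<longrightarrow> j \<noteq> j' \<longrightarrow> path_edges (snd cp j) \<inter> path_edges (snd cp j') = {}))"
    proof (cases "i < 4")
      case True then show ?thesis using cex0 by blast
    next
      case False then show ?thesis by blast
    qed
  qed
  obtain F where F: "\<forall>i. i < 4 \<longrightarrow> fst (F i) \<in> B i \<and>
      (\<forall>j<4. j \<noteq> i \<longrightarrow> is_path E (snd (F i) j) (fst (F i)) (att i j) \<and> set (snd (F i) j) \<subseteq> B i) \<and>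
      (\<forall>j j'. j < 4 \<longrightarrow> j' < 4 \<longrightarrow> j \<noteq> i \<longrightarrow> j' \<noteq> i \<longrightarrow> j \<noteq> j' \<longrightarrow> path_edges (snd (F i) j) \<inter> path_edges (snd (F i) j') = {})"
    using choice[OF cex] by blast
  define cen where "cen i = fst (F i)" for i
  define pi where "pi i j = snd (F i) j" for i j
  have cenB: "\<And>i. i < 4 \<Longrightarrow> cen i \<in> B i" using F unfolding cen_def by blast
  have pip: "\<And>i j. i < 4 \<Longrightarrow> j < 4 \<Longrightarrow> j \<noteq> i \<Longrightarrow> is_path E (pi i j) (cen i) (att i j) \<and> set (pi i j) \<subseteq> B i"
    using F unfolding cen_def pi_def by blast
  have pid: "\<And>i j j'. i < 4 \<Longrightarrow> j < 4 \<Longrightarrow> j' < 4 \<Longrightarrow> j \<noteq> i \<Longrightarrow> j' \<noteq> i \<Longrightarrow> j \<noteq> j' \<Longrightarrow>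
      path_edges (pi i j) \<inter> path_edges (pi i j') = {}"
    using F unfolding pi_def by blast
  define PP where "PP i j = pi i j @ rev (pi j i)" for i j
  have PPpath: "\<And>i j. i < j \<Longrightarrow> j < 4 \<Longrightarrow> is_path E (PP i j) (cen i) (cen j)"
  proof -
    fix i j :: nat assume ij: "i < j" "j < 4"
    have a: "is_path E (pi i j) (cen i) (att i j)" "set (pi i j) \<subseteq> B i" using pip ij by auto
    have b: "is_path E (rev (pi j i)) (att j i) (cen j)" "set (pi j i) \<subseteq> B j"
      using pip[of j i] is_path_rev ij by auto
    have "B i \<inter> B j = {}" using Bd ij by blast
    then have "set (pi i j) \<inter> set (rev (pi j i)) = {}" using a(2) b(2) by auto
    then show "is_path E (PP i j) (cen i) (cen j)" unfolding PP_def
      using is_path_append[OF a(1) b(1)] attp[of i j] ij by simp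
  qed
  have PPe: "\<And>i j. i < j \<Longrightarrow> j < 4 \<Longrightarrow> path_edges (PP i j) \<subseteq> path_edges (pi i j) \<union> path_edges (pi j i) \<union> {{att i j, att j i}}"
  proof -
    fix i j :: nat assume ij: "i < j" "j < 4"
    have a: "is_path E (pi i j) (cen i) (att i j)" using pip ij by auto
    have b: "is_path E (rev (pi j i)) (att j i) (cen j)" using pip[of j i] is_path_rev ij by auto
    have "pi i j \<noteq> []" "last (pi i j) = att i j" using a unfolding is_path_def by auto
    moreover have "rev (pi j i) \<noteq> []" "hd (rev (pi j i)) = att j i" using b unfolding is_path_def by auto
    ultimately show "path_edges (PP i j) \<subseteq> path_edges (pi i j) \<union> path_edges (pi j i) \<union> {{att i j, att j i}}"
      unfolding PP_def using pe_append_sub[of "pi i j" "rev (pi j i)"] path_edges_rev[of "pi j i"] by simp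
  qed
  have inner: "\<And>m n f. m < 4 \<Longrightarrow> n < 4 \<Longrightarrow> n \<noteq> m \<Longrightarrow> f \<in> path_edges (pi m n) \<Longrightarrow>
      \<exists>u v. f = {u,v} \<and> u \<noteq> v \<and> u \<in> B m \<and> v \<in> B m"
  proof -
    fix m n f assume h: "m < (4::nat)" "n < 4" "n \<noteq> m" "f \<in> path_edges (pi m n)"
    have "is_path E (pi m n) (cen m) (att m n)" "set (pi m n) \<subseteq> B m" using pip h by auto
    then show "\<exists>u v. f = {u,v} \<and> u \<noteq> v \<and> u \<in> B m \<and> v \<in> B m"
      using pe_elem[of "pi m n" f] h(4) unfolding is_path_def by blast
  qed
  have disjPP: "\<And>i j i' j'. i < j \<Longrightarrow> j < 4 \<Longrightarrow> i' < j' \<Longrightarrow> j' < 4 \<Longrightarrow> (i, j) \<noteq> (i', j') \<Longrightarrow>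
            path_edges (PP i j) \<inter> path_edges (PP i' j') = {}"
  proof (rule ccontr)
    fix i j i' j' :: nat
    assume h: "i < j" "j < 4" "i' < j'" "j' < 4" "(i, j) \<noteq> (i', j')" "path_edges (PP i j) \<inter> path_edges (PP i' j') \<noteq> {}"
    then obtain f where f: "f \<in> path_edges (PP i j)" "f \<in> path_edges (PP i' j')" by blast
    have "f \<in> path_edges (pi i j) \<or> f \<in> path_edges (pi j i) \<or> f = {att i j, att j i}"
      using PPe[OF h(1,2)] f(1) by blast
    then have f1: "(\<exists>m n. {m,n} = {i,j} \<and> m \<noteq> n \<and> f \<in> path_edges (pi m n)) \<or> f = {att i j, att j i}"
    proof (elim disjE)
      assume "f \<in> path_edges (pi i j)" then show ?thesis using h by blast
    next
      assume "f \<in> path_edges (pi j i)"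
      moreover have "{j,i} = {i,j}" by (simp add: insert_commute)
      ultimately show ?thesis using h by blast
    qed simp
    have "f \<in> path_edges (pi i' j') \<or> f \<in> path_edges (pi j' i') \<or> f = {att i' j', att j' i'}"
      using PPe[OF h(3,4)] f(2) by blast
    then have f2: "(\<exists>m n. {m,n} = {i',j'} \<and> m \<noteq> n \<and> f \<in> path_edges (pi m n)) \<or> f = {att i' j', att j' i'}"
    proof (elim disjE)
      assume "f \<in> path_edges (pi i' j')" then show ?thesis using h by blast
    next
      assume "f \<in> path_edges (pi j' i')"
      moreover have "{j',i'} = {i',j'}" by (simp add: insert_commute)
      ultimately show ?thesis using h by blast
    qed simp
    have a1: "att i j \<in> B i" "att j i \<in> B j" "att i' j' \<in> B i'" "att j' i' \<in> B j'" using attp h by auto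
    show False
    proof (cases "f = {att i j, att j i}")
      case c1: True
      show ?thesis
      proof (cases "f = {att i' j', att j' i'}")
        case True
        then have "att i j \<in> {att i' j', att j' i'}" "att j i \<in> {att i' j', att j' i'}" using c1 by auto
        have i4: "i < 4" "j < 4" "i' < 4" "j' < 4" using h by auto
        have "i = i' \<or> i = j'"
        proof (cases "att i j = att i' j'")
          case True then show ?thesis using Bdis[of "att i j" i i'] a1 i4 by simp
        next
          case False then have "att i j = att j' i'" using \<open>att i j \<in> {att i' j', att j' i'}\<close> by simp
          then show ?thesis using Bdis[of "att i j" i j'] a1 i4 by simp
        qed
        moreover have "j = i' \<or> j = j'"
        proof (cases "att j i = att i' j'")
          case True then show ?thesis using Bdis[of "att j i" j i'] a1 i4 by simp
        next
          case False then have "att j i = att j' i'" using \<open>att j i \<in> {att i' j', att j' i'}\<close> by simp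
          then show ?thesis using Bdis[of "att j i" j j'] a1 i4 by simp
        qed
        ultimately have "i \<in> {i', j'}" "j \<in> {i', j'}" by auto
        then show False using h by auto
      next
        case False
        then obtain m n where mn: "{m,n} = {i',j'}" "m \<noteq> n" "f \<in> path_edges (pi m n)" using f2 by blast
        have mn4: "m < 4" "n < 4" using mn h by (auto simp: doubleton_eq_iff)
        obtain u v where uv: "f = {u,v}" "u \<noteq> v" "u \<in> B m" "v \<in> B m" using inner[OF mn4 mn(2)[symmetric] mn(3)] by blast
        have "att i j \<in> B m" "att j i \<in> B m" using uv c1 by (auto simp: doubleton_eq_iff)
        moreover have "i < 4" "j < 4" using h by auto
        ultimately have "i = m" "j = m" using a1 Bdis[of "att i j" i m] Bdis[of "att j i" j m] mn4 by auto
        then show False using h by simp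
      qed
    next
      case False
      then obtain m n where mn: "{m,n} = {i,j}" "m \<noteq> n" "f \<in> path_edges (pi m n)" using f1 by blast
      have mn4: "m < 4" "n < 4" using mn h by (auto simp: doubleton_eq_iff)
      obtain u v where uv: "f = {u,v}" "u \<noteq> v" "u \<in> B m" "v \<in> B m" using inner[OF mn4 mn(2)[symmetric] mn(3)] by blast
      show False
      proof (cases "f = {att i' j', att j' i'}")
        case True
        have "att i' j' \<in> B m" "att j' i' \<in> B m" using uv True by (auto simp: doubleton_eq_iff)
        moreover have "i' < 4" "j' < 4" using h by auto
        ultimately have "i' = m" "j' = m" using a1 Bdis[of "att i' j'" i' m] Bdis[of "att j' i'" j' m] mn4 by auto
        then show False using h by simp
      next
        case False
        then obtain m' n' where mn': "{m',n'} = {i',j'}" "m' \<noteq> n'" "f \<in> path_edges (pi m' n')" using f2 by blast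
        have mn4': "m' < 4" "n' < 4" using mn' h by (auto simp: doubleton_eq_iff)
        obtain u' v' where uv': "f = {u',v'}" "u' \<noteq> v'" "u' \<in> B m'" "v' \<in> B m'" using inner[OF mn4' mn'(2)[symmetric] mn'(3)] by blast
        have "u \<in> B m'" using uv uv' by (auto simp: doubleton_eq_iff)
        then have mm: "m = m'" using Bdis uv mn4 mn4' by blast
        show False
        proof (cases "n = n'")
          case True
          then have "{i,j} = {i',j'}" using mn mn' mm by simp
          then show False using h by (auto simp: doubleton_eq_iff)
        next
          case False
          then have "path_edges (pi m n) \<inter> path_edges (pi m n') = {}" using pid[of m n n'] mn4 mn4' mn mn' mm by auto
          then show False using mn(3) mn'(3) mm by blast
        qed
      qed
    qed
  qed
  have "inj_on cen {..<4}" unfolding inj_on_def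
  proof (intro ballI impI)
    fix a b assume ab: "a \<in> {..<(4::nat)}" "b \<in> {..<(4::nat)}" "cen a = cen b"
    then show "a = b" using cenB[of a] cenB[of b] Bdis[of "cen a" a b] by auto
  qed
  moreover have "cen ` {..<4} \<subseteq> V" using cenB B by blast
  ultimately show ?thesis unfolding has_Kt_immersion_def
    apply (intro exI[of _ cen] exI[of _ PP])
    using PPpath disjPP by simp
qed

lemma chain_connected:
  assumes ch: "\<And>t. a \<le> t \<Longrightarrow> Suc t < b \<Longrightarrow> {f t, f (Suc t)} \<in> E"
  shows "connected_in E (f ` {a..<b})"
proof -
  let ?B = "f ` {a..<b}"
  let ?R = "\<lambda>u v. u \<in> ?B \<and> v \<in> ?B \<and> {u, v} \<in> E"
  have fw: "\<And>s t. a \<le> s \<Longrightarrow> s \<le> t \<Longrightarrow> t < b \<Longrightarrow> ?R\<^sup>*\<^sup>* (f s) (f t)"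
  proof -
    fix s t assume h: "a \<le> s" "s \<le> t" "t < b"
    then show "?R\<^sup>*\<^sup>* (f s) (f t)"
    proof (induction t)
      case 0 then show ?case by simp
    next
      case (Suc t)
      show ?case
      proof (cases "s = Suc t")
        case True then show ?thesis by simp
      next
        case False
        then have "?R\<^sup>*\<^sup>* (f s) (f t)" using Suc by simp
        moreover have "?R (f t) (f (Suc t))" using ch[of t] Suc False by auto
        ultimately show ?thesis by (rule rtranclp.rtrancl_into_rtrancl)
      qed
    qed
  qed
  have sym: "\<And>x y. ?R\<^sup>*\<^sup>* x y \<Longrightarrow> ?R\<^sup>*\<^sup>* y x"
  proof -
    fix x y assume "?R\<^sup>*\<^sup>* x y"
    then show "?R\<^sup>*\<^sup>* y x"
    proof (induction rule: rtranclp_induct)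
      case base then show ?case by simp
    next
      case (step y z)
      then have "?R z y" by (simp add: insert_commute)
      then show ?case using step(3) by (rule converse_rtranclp_into_rtranclp)
    qed
  qed
  show ?thesis unfolding connected_in_def
  proof (intro ballI)
    fix x y assume "x \<in> ?B" "y \<in> ?B"
    then obtain s t where st: "s \<in> {a..<b}" "t \<in> {a..<b}" "x = f s" "y = f t" by blast
    show "?R\<^sup>*\<^sup>* x y"
    proof (cases "s \<le> t")
      case True then show ?thesis using fw st by auto
    next
      case False then show ?thesis using fw[of t s] st sym by auto
    qed
  qed
qed

lemma max4:
  assumes "finite A" "Max (insert (0::nat) A) \<ge> 4"
  shows "\<exists>a\<in>A. a \<ge> 4"
proof -
  have "\<exists>a\<in>insert 0 A. 4 \<le> a" using Max_ge_iff[of "insert 0 A" 4] assms by simp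
  then show ?thesis by auto
qed

context mg begin

lemma deg4_minor:
  assumes "max_degree VH V ends \<ge> 4"
  shows "has_Kt_minor 4 V (line_edges V ends)"
proof -
  obtain w where w: "w \<in> VH" "mdegree VH V ends w \<ge> 4"
    using max4[of "mdegree VH V ends ` VH"] assms finVH unfolding max_degree_def by auto
  let ?S = "{e\<in>V. w \<in> ends e}"
  have fS: "finite ?S" using finV by simp
  have "card ?S \<ge> 4" using w unfolding mdegree_def by simp
  then obtain T where T: "T \<subseteq> ?S" "card T = 4" using obtain_subset_with_card_n by metis
  have fT: "finite T" using T fS finite_subset by blast
  obtain h where h: "bij_betw h {0..<card T} T" using ex_bij_betw_nat_finite[OF fT] by blast
  have hT: "\<And>i. i < 4 \<Longrightarrow> h i \<in> T" using h T(2) bij_betwE by fastforce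
  have hinj: "\<And>i j. i < 4 \<Longrightarrow> j < 4 \<Longrightarrow> h i = h j \<Longrightarrow> i = j"
    using h T(2) unfolding bij_betw_def inj_on_def by auto
  define B where "B i = {h i}" for i :: nat
  have "(\<forall>i<4. B i \<noteq> {} \<and> B i \<subseteq> V \<and> connected_in (line_edges V ends) (B i)) \<and>
        (\<forall>i j. i < j \<and> j < 4 \<longrightarrow> B i \<inter> B j = {} \<and> (\<exists>x\<in>B i. \<exists>y\<in>B j. {x, y} \<in> line_edges V ends))"
  proof (intro conjI allI impI)
    fix i :: nat assume i: "i < 4"
    show "B i \<noteq> {}" unfolding B_def by simp
    show "B i \<subseteq> V" unfolding B_def using hT[OF i] T by auto
    show "connected_in (line_edges V ends) (B i)" unfolding B_def connected_in_def by simp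
  next
    fix i j :: nat assume ij: "i < j \<and> j < 4"
    then have ne: "h i \<noteq> h j" using hinj[of i j] by auto
    then show "B i \<inter> B j = {}" unfolding B_def by simp
    have "i < 4" "j < 4" using ij by auto
    then have "h i \<in> T" "h j \<in> T" using hT by auto
    then have "h i \<in> V" "h j \<in> V" "w \<in> ends (h i)" "w \<in> ends (h j)" using T by auto
    then have "{h i, h j} \<in> line_edges V ends" using ne by (intro line_edgesI) auto
    then show "\<exists>x\<in>B i. \<exists>y\<in>B j. {x, y} \<in> line_edges V ends" unfolding B_def by simp
  qed
  then show ?thesis unfolding has_Kt_minor_def by blast
qed

end

lemma pairs6:
  assumes "P 0 1" "P 0 2" "P 0 3" "P 1 2" "P 1 3" "P 2 3"
  shows "\<forall>i j. i < j \<and> j < (4::nat) \<longrightarrow> P i j"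
proof (intro allI impI)
  fix i j :: nat assume ij: "i < j \<and> j < 4"
  then have "(i = 0 \<and> j = 1) \<or> (i = 0 \<and> j = 2) \<or> (i = 0 \<and> j = 3) \<or> (i = 1 \<and> j = 2) \<or> (i = 1 \<and> j = 3) \<or> (i = 2 \<and> j = 3)"
    by arith
  then show "P i j" using assms by auto
qed

lemma all4:
  assumes "P 0" "P 1" "P 2" "P 3"
  shows "\<forall>i<(4::nat). P i"
  using assms nat4 by auto

context mg begin

lemma cyc_adj:
  assumes c: "cyc_list vs es" and t: "Suc t < length es"
  shows "{es!t, es!Suc t} \<in> line_edges V ends"
proof -
  have l: "length vs = length es" using cyc_len[OF c] .
  have "vs!Suc t \<in> ends (es!t)" using cyc_ends[OF c, of t] t l by simp
  moreover have "vs!Suc t \<in> ends (es!Suc t)" using cyc_ends[OF c, of "Suc t"] t l by simp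
  moreover have "es!t \<noteq> es!Suc t" using cyc_dist[OF c] t by (simp add: nth_eq_iff_index_eq)
  moreover have "es!t \<in> V" "es!Suc t \<in> V" using cyc_V[OF c] t by auto
  ultimately show ?thesis by (intro line_edgesI) auto
qed

lemma ear_core:
  assumes c: "cyc_list vs es" and k3: "length es \<ge> 3"
    and Q: "connected_in (line_edges V ends) Q" "Q \<subseteq> V" "Q \<inter> set es = {}"
    and q: "q1 \<in> Q" "vs!0 \<in> ends q1" "q2 \<in> Q" "vs!j \<in> ends q2" and j: "0 < j" "j < length es"
  shows "has_Kt_minor 4 V (line_edges V ends)"
proof -
  define k where "k = length es"
  have l: "length vs = k" using cyc_len[OF c] k_def by simp
  have des: "distinct es" using cyc_dist[OF c] by simp
  have esV: "set es \<subseteq> V" using cyc_V[OF c] .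
  define b where "b = (if j < k - 1 then j else k - 2)"
  define cc where "cc = k - 1"
  have bc: "0 < b" "b < cc" "cc < k" "Suc cc = k" using j k3 unfolding b_def cc_def k_def by auto
  have beta: "vs!j \<in> ends (es!b)"
  proof (cases "j < k - 1")
    case True then show ?thesis using cyc_ends[OF c, of j] j l k_def unfolding b_def by simp
  next
    case False
    then have "j = k - 1" "b = k - 2" using j k_def unfolding b_def by auto
    moreover have "Suc (k - 2) = k - 1" using k3 k_def by simp
    ultimately show ?thesis using cyc_ends[OF c, of "k-2"] k3 l k_def by simp
  qed
  have "0 < length es" using k3 by linarith
  then have alpha0: "vs!0 \<in> ends (es!0)" using cyc_ends[OF c, of 0] l k_def by simp
  have alphac: "vs!0 \<in> ends (es!cc)" using cyc_ends[OF c, of cc] bc l k_def by simp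
  have ch: "\<And>t. Suc t < k \<Longrightarrow> {es!t, es!Suc t} \<in> line_edges V ends" using cyc_adj[OF c] k_def by simp
  define B where "B i = (if i = 0 then Q else if i = 1 then (!) es ` {0..<b} else if i = 2 then (!) es ` {b..<cc} else (!) es ` {cc..<k})" for i :: nat
  have B0: "B 0 = Q" and B1: "B 1 = (!) es ` {0..<b}" and B2: "B 2 = (!) es ` {b..<cc}" and B3: "B 3 = (!) es ` {cc..<k}"
    unfolding B_def by simp_all
  have arc: "\<And>x y. x \<le> y \<Longrightarrow> y \<le> k \<Longrightarrow> x < y \<Longrightarrow> (!) es ` {x..<y} \<noteq> {} \<and> (!) es ` {x..<y} \<subseteq> V \<and> connected_in (line_edges V ends) ((!) es ` {x..<y})"
  proof -
    fix x y assume xy: "x \<le> y" "y \<le> k" "x < y"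
    have "(!) es ` {x..<y} \<subseteq> V" using esV xy k_def by auto
    moreover have "connected_in (line_edges V ends) ((!) es ` {x..<y})"
      by (rule chain_connected) (use ch xy in auto)
    ultimately show "(!) es ` {x..<y} \<noteq> {} \<and> (!) es ` {x..<y} \<subseteq> V \<and> connected_in (line_edges V ends) ((!) es ` {x..<y})"
      using xy by auto
  qed
  have adj: "\<And>x y. x \<in> V \<Longrightarrow> y \<in> V \<Longrightarrow> x \<noteq> y \<Longrightarrow> w \<in> ends x \<Longrightarrow> w \<in> ends y \<Longrightarrow> {x,y} \<in> line_edges V ends" for w
    by (intro line_edgesI) auto
  have arcdisj: "\<And>x1 y1 x2 y2. y1 \<le> x2 \<Longrightarrow> y2 \<le> k \<Longrightarrow> (!) es ` {x1..<y1} \<inter> (!) es ` {x2..<y2} = {}"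
  proof -
    fix x1 y1 x2 y2 :: nat assume h: "y1 \<le> x2" "y2 \<le> k"
    show "(!) es ` {x1..<y1} \<inter> (!) es ` {x2..<y2} = {}"
    proof (rule ccontr)
      assume "(!) es ` {x1..<y1} \<inter> (!) es ` {x2..<y2} \<noteq> {}"
      then obtain s t where st: "s \<in> {x1..<y1}" "t \<in> {x2..<y2}" "es!s = es!t" by blast
      then have "s < k" "t < k" "s \<noteq> t" using h by auto
      then show False using st(3) des k_def by (simp add: nth_eq_iff_index_eq)
    qed
  qed
  have Qdisj: "\<And>x y :: nat. y \<le> k \<Longrightarrow> Q \<inter> (!) es ` {x..<y} = {}"
  proof -
    fix x y :: nat assume "y \<le> k"
    then have "(!) es ` {x..<y} \<subseteq> set es" using k_def by auto
    then show "Q \<inter> (!) es ` {x..<y} = {}" using Q(3) by blast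
  qed
  have q1nes: "\<And>t. t < k \<Longrightarrow> q1 \<noteq> es!t" using Q(3) q(1) k_def by (metis disjoint_iff nth_mem)
  have q2nes: "\<And>t. t < k \<Longrightarrow> q2 \<noteq> es!t" using Q(3) q(3) k_def by (metis disjoint_iff nth_mem)
  have q1V: "q1 \<in> V" "q2 \<in> V" using Q(2) q by auto
  have esiV: "\<And>t. t < k \<Longrightarrow> es!t \<in> V" using esV k_def by auto
  have esne: "\<And>s t. s < k \<Longrightarrow> t < k \<Longrightarrow> s \<noteq> t \<Longrightarrow> es!s \<noteq> es!t" using des k_def by (simp add: nth_eq_iff_index_eq)
  have p1: "\<forall>i<4. B i \<noteq> {} \<and> B i \<subseteq> V \<and> connected_in (line_edges V ends) (B i)"
    apply (rule all4)
    using Q q arc[of 0 b] arc[of b cc] arc[of cc k] bc unfolding B0 B1 B2 B3 by auto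
  have p2: "\<forall>i j. i < j \<and> j < 4 \<longrightarrow> B i \<inter> B j = {} \<and> (\<exists>x\<in>B i. \<exists>y\<in>B j. {x, y} \<in> line_edges V ends)"
  proof (rule pairs6)
    show "B 0 \<inter> B 1 = {} \<and> (\<exists>x\<in>B 0. \<exists>y\<in>B 1. {x, y} \<in> line_edges V ends)"
      unfolding B0 B1 using Qdisj[of b 0] q(1) bc adj[OF q1V(1) esiV q1nes q(2) alpha0] bc by force
    show "B 0 \<inter> B 2 = {} \<and> (\<exists>x\<in>B 0. \<exists>y\<in>B 2. {x, y} \<in> line_edges V ends)"
      unfolding B0 B2 using Qdisj[of cc b] q(3) bc adj[OF q1V(2) esiV q2nes q(4) beta] bc by force
    show "B 0 \<inter> B 3 = {} \<and> (\<exists>x\<in>B 0. \<exists>y\<in>B 3. {x, y} \<in> line_edges V ends)"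
      unfolding B0 B3 using Qdisj[of k cc] q(1) bc adj[OF q1V(1) esiV q1nes q(2) alphac] bc by force
    have "{es!(b-1), es!Suc (b-1)} \<in> line_edges V ends" using ch[of "b-1"] bc by simp
    then have "{es!(b-1), es!b} \<in> line_edges V ends" using bc by simp
    then show "B 1 \<inter> B 2 = {} \<and> (\<exists>x\<in>B 1. \<exists>y\<in>B 2. {x, y} \<in> line_edges V ends)"
      unfolding B1 B2 using arcdisj[of b b cc 0] bc by force
    have "{es!(cc-1), es!Suc (cc-1)} \<in> line_edges V ends" using ch[of "cc-1"] bc by simp
    then have "{es!(cc-1), es!cc} \<in> line_edges V ends" using bc by simp
    then show "B 2 \<inter> B 3 = {} \<and> (\<exists>x\<in>B 2. \<exists>y\<in>B 3. {x, y} \<in> line_edges V ends)"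
      unfolding B2 B3 using arcdisj[of cc cc k b] bc by force
    have "{es!0, es!cc} \<in> line_edges V ends"
      using adj[OF esiV esiV esne alpha0 alphac] bc by simp
    then show "B 1 \<inter> B 3 = {} \<and> (\<exists>x\<in>B 1. \<exists>y\<in>B 3. {x, y} \<in> line_edges V ends)"
      unfolding B1 B3 using arcdisj[of b cc k 0] bc by force
  qed
  show ?thesis unfolding has_Kt_minor_def using p1 p2 by blast
qed

end

context mg begin

lemma ear_Q:
  assumes c: "cyc_list vs es" and c2: "cyc_list vs2 es2" and e0: "es2!0 \<in> set es"
    and out: "\<exists>e\<in>set es2. e \<notin> set es"
  shows "\<exists>Q q1 q2 \<alpha> \<beta>. connected_in (line_edges V ends) Q \<and> Q \<subseteq> V \<and> Q \<inter> set es = {} \<and>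
     q1 \<in> Q \<and> q2 \<in> Q \<and> \<alpha> \<in> ends q1 \<and> \<beta> \<in> ends q2 \<and> \<alpha> \<in> set vs \<and> \<beta> \<in> set vs \<and> \<alpha> \<noteq> \<beta>"
proof -
  define k2 where "k2 = length es2"
  have l2: "length vs2 = k2" using cyc_len[OF c2] k2_def by simp
  have k22: "k2 \<ge> 2" using cyc_len2[OF c2] k2_def by simp
  have dvs2: "distinct vs2" using cyc_dist[OF c2] by simp
  have ex1: "\<exists>r. r < k2 \<and> es2!r \<notin> set es" using out k2_def by (metis in_set_conv_nth)
  define r1 where "r1 = (LEAST r. r < k2 \<and> es2!r \<notin> set es)"
  have r1: "r1 < k2" "es2!r1 \<notin> set es" using LeastI_ex[OF ex1] unfolding r1_def by auto
  have r1min: "\<And>r. r < r1 \<Longrightarrow> es2!r \<in> set es"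
  proof -
    fix r assume r: "r < r1"
    then have "\<not> (r < k2 \<and> es2!r \<notin> set es)"
      using not_less_Least[of r "\<lambda>r. r < k2 \<and> es2!r \<notin> set es"] unfolding r1_def by blast
    moreover have "r < k2" using r r1(1) by simp
    ultimately show "es2!r \<in> set es" by blast
  qed
  have r1pos: "0 < r1" using r1(2) e0 by (cases r1) auto
  have ex2: "\<exists>r. r1 < r \<and> (r = k2 \<or> (r < k2 \<and> es2!r \<in> set es))" using r1 by blast
  define r2 where "r2 = (LEAST r. r1 < r \<and> (r = k2 \<or> (r < k2 \<and> es2!r \<in> set es)))"
  have r2: "r1 < r2" "r2 = k2 \<or> (r2 < k2 \<and> es2!r2 \<in> set es)" using LeastI_ex[OF ex2] unfolding r2_def by auto
  have r2le: "r2 \<le> k2" unfolding r2_def using r1 by (intro Least_le) simp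
  have r2min: "\<And>r. r1 < r \<Longrightarrow> r < r2 \<Longrightarrow> es2!r \<notin> set es"
  proof -
    fix r assume h: "r1 < r" "r < r2"
    then have "\<not> (r1 < r \<and> (r = k2 \<or> (r < k2 \<and> es2!r \<in> set es)))"
      using not_less_Least[of r "\<lambda>r. r1 < r \<and> (r = k2 \<or> (r < k2 \<and> es2!r \<in> set es))"] unfolding r2_def by blast
    then show "es2!r \<notin> set es" using h r2le by auto
  qed
  define Q where "Q = (!) es2 ` {r1..<r2}"
  have QD: "Q \<inter> set es = {}"
  proof -
    have "\<And>t. t \<in> {r1..<r2} \<Longrightarrow> es2!t \<notin> set es"
    proof -
      fix t assume t: "t \<in> {r1..<r2}"
      show "es2!t \<notin> set es"
      proof (cases "t = r1")
        case True then show ?thesis using r1 by simp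
      next
        case False then show ?thesis using r2min t by auto
      qed
    qed
    then show ?thesis unfolding Q_def by blast
  qed
  have QV: "Q \<subseteq> V" unfolding Q_def using cyc_V[OF c2] r2le k2_def by auto
  have Qc: "connected_in (line_edges V ends) Q" unfolding Q_def
    by (rule chain_connected) (use cyc_adj[OF c2] r2le k2_def in auto)
  have q1: "es2!r1 \<in> Q" unfolding Q_def using r2 by auto
  have q2: "es2!(r2-1) \<in> Q" unfolding Q_def using r2 by auto
  have a1: "vs2!r1 \<in> ends (es2!r1)" using cyc_ends[OF c2, of r1] r1 l2 k2_def by simp
  have a2: "vs2!r1 \<in> set vs"
  proof -
    have "es2!(r1-1) \<in> set es" using r1min r1pos by simp
    moreover have "Suc (r1 - 1) = r1" using r1pos by simp
    moreover have "ends (es2!(r1-1)) = {vs2!(r1-1), vs2!(Suc (r1-1) mod k2)}" using cyc_ends[OF c2, of "r1-1"] r1 l2 k2_def by simp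
    ultimately show ?thesis using cyc_ends_in[OF c] r1 by auto
  qed
  define r' where "r' = r2 mod k2"
  have r'k: "r' < k2" unfolding r'_def using k22 by simp
  have b1: "vs2!r' \<in> ends (es2!(r2-1))"
  proof -
    have "Suc (r2 - 1) = r2" using r2 by simp
    then show ?thesis using cyc_ends[OF c2, of "r2-1"] r2 r2le l2 k2_def unfolding r'_def by simp
  qed
  have b2: "vs2!r' \<in> set vs"
  proof (cases "r2 = k2")
    case True
    then have "r' = 0" unfolding r'_def by simp
    moreover have "0 < length es2" using k22 k2_def by linarith
    then have "vs2!0 \<in> ends (es2!0)" using cyc_ends[OF c2, of 0] l2 k2_def by simp
    ultimately show ?thesis using cyc_ends_in[OF c e0] by auto
  next
    case False
    then have "r2 < k2" "es2!r2 \<in> set es" using r2 by auto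
    moreover then have "r' = r2" unfolding r'_def by simp
    moreover have "vs2!r2 \<in> ends (es2!r2)" using cyc_ends[OF c2, of r2] \<open>r2 < k2\<close> l2 k2_def by simp
    ultimately show ?thesis using cyc_ends_in[OF c] by auto
  qed
  have ne: "vs2!r1 \<noteq> vs2!r'"
  proof -
    have "r1 \<noteq> r'"
    proof (cases "r2 = k2")
      case True then show ?thesis unfolding r'_def using r1pos by simp
    next
      case False then have "r2 < k2" using r2le by simp
      then show ?thesis unfolding r'_def using r2 by simp
    qed
    then show ?thesis using dvs2 r1 r'k l2 by (simp add: nth_eq_iff_index_eq)
  qed
  show ?thesis using Qc QV QD q1 q2 a1 a2 b1 b2 ne by blast
qed

lemma ear_minor:
  assumes c: "cyc_list vs es" "length es \<ge> 3" and c2: "cyc_list vs2 es2"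
    and out: "\<exists>e\<in>set es2. e \<notin> set es" and meet: "set es2 \<inter> set es \<noteq> {}"
  shows "has_Kt_minor 4 V (line_edges V ends)"
proof -
  obtain r0 where r0: "r0 < length es2" "es2!r0 \<in> set es" using meet by (metis disjoint_iff in_set_conv_nth)
  have c2': "cyc_list (rotate r0 vs2) (rotate r0 es2)" using cyc_rotate[OF c2] .
  have "0 < length es2" using r0(1) by linarith
  then have e0: "rotate r0 es2 ! 0 \<in> set es" using r0 nth_rotate[of 0 es2 r0] by simp
  have out': "\<exists>e\<in>set (rotate r0 es2). e \<notin> set es" using out by simp
  obtain Q q1 q2 \<alpha> \<beta> where Q: "connected_in (line_edges V ends) Q" "Q \<subseteq> V" "Q \<inter> set es = {}"
     "q1 \<in> Q" "q2 \<in> Q" "\<alpha> \<in> ends q1" "\<beta> \<in> ends q2" "\<alpha> \<in> set vs" "\<beta> \<in> set vs" "\<alpha> \<noteq> \<beta>"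
    using ear_Q[OF c(1) c2' e0 out'] by blast
  obtain i0 where i0: "i0 < length vs" "vs!i0 = \<alpha>" using Q(8) by (metis in_set_conv_nth)
  define vs' where "vs' = rotate i0 vs"
  define es' where "es' = rotate i0 es"
  have c': "cyc_list vs' es'" unfolding vs'_def es'_def using cyc_rotate[OF c(1)] .
  have "0 < length vs" using i0(1) by linarith
  then have v0: "vs'!0 = \<alpha>" unfolding vs'_def using i0 nth_rotate[of 0 vs i0] by simp
  have "\<beta> \<in> set vs'" unfolding vs'_def using Q(9) by simp
  then obtain j where j: "j < length vs'" "vs'!j = \<beta>" by (metis in_set_conv_nth)
  have "j \<noteq> 0"
  proof
    assume "j = 0"
    then have "\<beta> = \<alpha>" using j v0 by simp
    then show False using Q(10) by simp
  qed
  moreover have "length vs' = length es'" using cyc_len[OF c'] .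
  moreover have "length es' = length es" unfolding es'_def by simp
  moreover have "set es' = set es" unfolding es'_def by simp
  ultimately show ?thesis
    using ear_core[OF c', of Q q1 q2 j] c(2) Q j v0 by auto
qed

lemma two_cycle_ends:
  assumes c: "cyc_list vs es" "length es = 2"
  shows "ends (es!0) = ends (es!1)"
proof -
  have l: "length vs = 2" using cyc_len[OF c(1)] c(2) by simp
  show ?thesis using cyc_ends[OF c(1), of 0] cyc_ends[OF c(1), of 1] c(2) l by (simp add: insert_commute)
qed

lemma cyc_case:
  assumes C1: "is_cycle VH V ends C1" and C2: "is_cycle VH V ends C2" and ne: "C1 \<noteq> C2"
    and meet: "C1 \<inter> C2 \<noteq> {}" and c1: "card C1 \<noteq> 2"
  shows "has_Kt_minor 4 V (line_edges V ends)"
proof -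
  obtain vs1 es1 where e1: "cyc_list vs1 es1" "set es1 = C1" using C1 is_cycle_iff by blast
  obtain vs2 es2 where e2: "cyc_list vs2 es2" "set es2 = C2" using C2 is_cycle_iff by blast
  have l1: "length es1 \<ge> 3" using cyc_card[OF e1(1)] cyc_len2[OF e1(1)] c1 e1(2) by simp
  show ?thesis
  proof (cases "C2 \<subseteq> C1")
    case False
    then show ?thesis using ear_minor[OF e1(1) l1 e2(1)] e1 e2 meet by blast
  next
    case True
    then have out: "\<exists>e\<in>set es1. e \<notin> set es2" using ne e1 e2 by blast
    show ?thesis
    proof (cases "card C2 = 2")
      case False
      then have l2: "length es2 \<ge> 3" using cyc_card[OF e2(1)] cyc_len2[OF e2(1)] e2(2) by simp
      show ?thesis using ear_minor[OF e2(1) l2 e1(1) out] e1 e2 meet by blast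
    next
      case c22: True
      then have l2: "length es2 = 2" using cyc_card[OF e2(1)] e2(2) by simp
      have en: "ends (es2!0) = ends (es2!1)" using two_cycle_ends[OF e2(1) l2] .
      have dn: "es2!0 \<noteq> es2!1" using cyc_dist[OF e2(1)] l2 by (simp add: nth_eq_iff_index_eq)
      have "es2!0 \<in> set es1" "es2!1 \<in> set es1" using True e1 e2 l2 by (auto intro!: nth_mem)
      then obtain i j where ij: "i < length es1" "es1!i = es2!0" "j < length es1" "es1!j = es2!1"
        by (metis in_set_conv_nth)
      then have "i = j" using cyc_ends_inj[OF e1(1) l1 ij(1) ij(3)] en by simp
      then show ?thesis using ij dn by simp
    qed
  qed
qed

lemma P_minor:
  assumes "max_degree VH V ends \<ge> 4 \<or>
     (\<exists>C1 C2. is_cycle VH V ends C1 \<and> is_cycle VH V ends C2 \<and> C1 \<noteq> C2 \<and>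
                 C1 \<inter> C2 \<noteq> {} \<and> (card C1 \<noteq> 2 \<or> card C2 \<noteq> 2))"
  shows "has_Kt_minor 4 V (line_edges V ends)"
proof (cases "max_degree VH V ends \<ge> 4")
  case True then show ?thesis by (rule deg4_minor)
next
  case False
  then obtain C1 C2 where h: "is_cycle VH V ends C1" "is_cycle VH V ends C2" "C1 \<noteq> C2" "C1 \<inter> C2 \<noteq> {}"
    "card C1 \<noteq> 2 \<or> card C2 \<noteq> 2" using assms by blast
  show ?thesis
  proof (cases "card C1 \<noteq> 2")
    case True then show ?thesis using cyc_case[OF h(1,2,3,4)] by blast
  next
    case False
    then have "card C2 \<noteq> 2" using h(5) by blast
    moreover have "C2 \<inter> C1 \<noteq> {}" using h(4) by blast
    ultimately show ?thesis using cyc_case[OF h(2,1) h(3)[symmetric]] by blast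
  qed
qed

end

lemma imm_P:
  fixes VH :: "nat set" and V :: "'a set" and ends :: "'a \<Rightarrow> nat set"
  assumes mgr: "multigraph VH V ends" and im: "has_Kt_immersion 4 V (line_edges V ends)"
  shows "max_degree VH V ends \<ge> 4 \<or>
     (\<exists>C1 C2. is_cycle VH V ends C1 \<and> is_cycle VH V ends C2 \<and> C1 \<noteq> C2 \<and>
                 C1 \<inter> C2 \<noteq> {} \<and> (card C1 \<noteq> 2 \<or> card C2 \<noteq> 2))"
proof (rule ccontr)
  assume np: "\<not> ?thesis"
  interpret mg VH V ends using mgr by (unfold_locales)
  have md: "max_degree VH V ends < 4" using np by simp
  have deg3: "\<And>w. card {e\<in>V. w \<in> ends e} \<le> 3"
  proof -
    fix w
    show "card {e\<in>V. w \<in> ends e} \<le> 3"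
    proof (cases "w \<in> VH")
      case True
      have "mdegree VH V ends w \<le> Max (insert 0 (mdegree VH V ends ` VH))"
        using True finVH by (intro Max_ge) auto
      then show ?thesis using md unfolding max_degree_def mdegree_def by simp
    next
      case False
      then have e: "{e\<in>V. w \<in> ends e} = {}" using ends_sub by blast
      show ?thesis by (subst e) simp
    qed
  qed
  obtain phi :: "nat \<Rightarrow> 'a" and P :: "nat \<Rightarrow> nat \<Rightarrow> 'a list" where ph: "inj_on phi {..<4}" "phi ` {..<4} \<subseteq> V"
    "\<forall>i j. i < j \<and> j < 4 \<longrightarrow> is_path (line_edges V ends) (P i j) (phi i) (phi j)"
    "\<forall>i j i' j'. i < j \<and> j < 4 \<and> i' < j' \<and> j' < 4 \<and> (i, j) \<noteq> (i', j') \<longrightarrow>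
            path_edges (P i j) \<inter> path_edges (P i' j') = {}"
    using im unfolding has_Kt_immersion_def by (elim exE conjE) (rule that)
  have I: "imm VH V ends phi P"
  proof (unfold_locales)
    show "\<And>w. card {e\<in>V. w \<in> ends e} \<le> 3" by (rule deg3)
    show "inj_on phi {..<4}" by (rule ph(1))
    show "phi ` {..<4} \<subseteq> V" by (rule ph(2))
    show "\<And>i j. i < j \<Longrightarrow> j < 4 \<Longrightarrow> is_path (line_edges V ends) (P i j) (phi i) (phi j)"
      using ph(3) by blast
    show "\<And>i j i' j'. i < j \<Longrightarrow> j < 4 \<Longrightarrow> i' < j' \<Longrightarrow> j' < 4 \<Longrightarrow> (i, j) \<noteq> (i', j') \<Longrightarrow>
            path_edges (P i j) \<inter> path_edges (P i' j') = {}"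
      using ph(4) by blast
  qed
  have "imm.noP VH V ends"
    unfolding imm.noP_def[OF I] using np by blast
  then show False using imm.no_imm[OF I] by blast
qed

theorem theorem4p2:
  fixes V :: "'a set" and E :: "'a set set"
  assumes "simple_graph V E" and "is_line_graph V E"
  shows "(has_Kt_immersion 4 V E \<longleftrightarrow> has_Kt_minor 4 V E) \<and>
         (has_Kt_minor 4 V E \<longleftrightarrow>
           (\<forall>VH ends. is_line_graph_of V E VH ends \<longrightarrow>
              max_degree VH V ends \<ge> 4 \<or>
              (\<exists>C1 C2. is_cycle VH V ends C1 \<and> is_cycle VH V ends C2 \<and> C1 \<noteq> C2 \<and>
                 C1 \<inter> C2 \<noteq> {} \<and> (card C1 \<noteq> 2 \<or> card C2 \<noteq> 2))))"
proof -
  obtain VH0 ends0 where L0: "is_line_graph_of V E VH0 ends0"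
    using assms(2) unfolding is_line_graph_def by blast
  have mg0: "multigraph VH0 V ends0" and E0: "E = line_edges V ends0"
    using L0 unfolding is_line_graph_of_def by auto
  have m2i: "has_Kt_minor 4 V E \<Longrightarrow> has_Kt_immersion 4 V E" by (rule minor_imm)
  have i2P: "\<And>VH ends. has_Kt_immersion 4 V E \<Longrightarrow> is_line_graph_of V E VH ends \<Longrightarrow>
              max_degree VH V ends \<ge> 4 \<or>
              (\<exists>C1 C2. is_cycle VH V ends C1 \<and> is_cycle VH V ends C2 \<and> C1 \<noteq> C2 \<and>
                 C1 \<inter> C2 \<noteq> {} \<and> (card C1 \<noteq> 2 \<or> card C2 \<noteq> 2))"
  proof -
    fix VH ends assume h: "has_Kt_immersion 4 V E" "is_line_graph_of V E VH ends"
    then have "multigraph VH V ends" "E = line_edges V ends" unfolding is_line_graph_of_def by auto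
    then show "max_degree VH V ends \<ge> 4 \<or>
              (\<exists>C1 C2. is_cycle VH V ends C1 \<and> is_cycle VH V ends C2 \<and> C1 \<noteq> C2 \<and>
                 C1 \<inter> C2 \<noteq> {} \<and> (card C1 \<noteq> 2 \<or> card C2 \<noteq> 2))"
      using imm_P h(1) by metis
  qed
  have P2m: "max_degree VH0 V ends0 \<ge> 4 \<or>
              (\<exists>C1 C2. is_cycle VH0 V ends0 C1 \<and> is_cycle VH0 V ends0 C2 \<and> C1 \<noteq> C2 \<and>
                 C1 \<inter> C2 \<noteq> {} \<and> (card C1 \<noteq> 2 \<or> card C2 \<noteq> 2)) \<Longrightarrow> has_Kt_minor 4 V E"
    using mg.P_minor[of VH0 V ends0] mg0 E0 unfolding mg_def by blast
  have A: "has_Kt_immersion 4 V E \<Longrightarrow> has_Kt_minor 4 V E" using i2P[OF _ L0] P2m by blast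
  have B: "has_Kt_minor 4 V E \<Longrightarrow> (\<forall>VH ends. is_line_graph_of V E VH ends \<longrightarrow>
              max_degree VH V ends \<ge> 4 \<or>
              (\<exists>C1 C2. is_cycle VH V ends C1 \<and> is_cycle VH V ends C2 \<and> C1 \<noteq> C2 \<and>
                 C1 \<inter> C2 \<noteq> {} \<and> (card C1 \<noteq> 2 \<or> card C2 \<noteq> 2)))"
    using m2i i2P by blast
  have C: "(\<forall>VH ends. is_line_graph_of V E VH ends \<longrightarrow>
              max_degree VH V ends \<ge> 4 \<or>
              (\<exists>C1 C2. is_cycle VH V ends C1 \<and> is_cycle VH V ends C2 \<and> C1 \<noteq> C2 \<and>
                 C1 \<inter> C2 \<noteq> {} \<and> (card C1 \<noteq> 2 \<or> card C2 \<noteq> 2))) \<Longrightarrow> has_Kt_minor 4 V E"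
  proof -
    assume h: "\<forall>VH ends. is_line_graph_of V E VH ends \<longrightarrow>
              max_degree VH V ends \<ge> 4 \<or>
              (\<exists>C1 C2. is_cycle VH V ends C1 \<and> is_cycle VH V ends C2 \<and> C1 \<noteq> C2 \<and>
                 C1 \<inter> C2 \<noteq> {} \<and> (card C1 \<noteq> 2 \<or> card C2 \<noteq> 2))"
    show "has_Kt_minor 4 V E" using P2m h[rule_format, OF L0] by blast
  qed
  show ?thesis
  proof (intro conjI iffI)
    assume "has_Kt_immersion 4 V E" then show "has_Kt_minor 4 V E" by (rule A)
  next
    assume "has_Kt_minor 4 V E" then show "has_Kt_immersion 4 V E" by (rule m2i)
  next
    assume "has_Kt_minor 4 V E" then show "\<forall>VH ends. is_line_graph_of V E VH ends \<longrightarrow>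
              max_degree VH V ends \<ge> 4 \<or>
              (\<exists>C1 C2. is_cycle VH V ends C1 \<and> is_cycle VH V ends C2 \<and> C1 \<noteq> C2 \<and>
                 C1 \<inter> C2 \<noteq> {} \<and> (card C1 \<noteq> 2 \<or> card C2 \<noteq> 2))" by (rule B)
  next
    assume "\<forall>VH ends. is_line_graph_of V E VH ends \<longrightarrow>
              max_degree VH V ends \<ge> 4 \<or>
              (\<exists>C1 C2. is_cycle VH V ends C1 \<and> is_cycle VH V ends C2 \<and> C1 \<noteq> C2 \<and>
                 C1 \<inter> C2 \<noteq> {} \<and> (card C1 \<noteq> 2 \<or> card C2 \<noteq> 2))"
    then show "has_Kt_minor 4 V E" by (rule C)
  qed
qed

end
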